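(* Consider the uncensored delayed-feedback bandit model (see context) with arm $1$ the unique optimal arm and $\Delta_k=\theta_1-\theta_k>0$ for $k\neq1$, and assume there is a constant $c>0$ such that $1-\tau_m\le c/m$ for all integers $m\ge1$. Let $\epsilon\in(0,1)$ and run DelayedUCB (uncensored version) with $\beta_\epsilon(t)=(1+\epsilon)\log t$. Then its expected regret satisfies \[ L(T)\le\frac{1+\epsilon}{1-\epsilon}\log(T)\sum_{k\neq1}\frac{1}{2\Delta_k}+o(\log T), \] where the $o(\log T)$ term (which may depend on $\epsilon$, $c$, $\theta$ and the delay distribution) divided by $\log T$ tends to $0$ as $T\to\infty$.
   Context: Uncensored delayed-feedback bandit model: $K$ arms with unknown conversion rates $\theta_1,\dots,\theta_K\in[0,1]$; a known delay distribution on $\mathbb{N}$ with CDF $\tau_d=\mathbb{P}(D\le d)$. At each round $t$ the learner picks $A_t$ based on past observations; this triggers, conditionally independently given the past, $C_t\sim\mathrm{Bernoulli}(\theta_{A_t})$ and $D_t\sim\tau$. With $X_{s,t}=C_s\mathbf{1}\{D_s\le t-s\}$, at round $t$ the learner observes all $X_{s,t}$, $s\le t$, and receives $Y_t=\sum_{s=1}^tC_s\mathbf{1}\{D_s=t-s\}$. Expected regret $L(T)=\mathbb{E}[r^*(T)-r(T)]$ with $r(T)=\sum_{t\le T}Y_t$ and $r^*(T)$ the reward of the oracle always playing arm $1$. Estimators: $N_k(t)=\sum_{s=1}^{t-1}\mathbf{1}\{A_s=k\}$; $\tilde N_k(t)=\sum_{s=1}^{t-1}\mathbf{1}\{A_s=k\}\tau_{t-s}$;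 $S_k(t)=\sum_{s=1}^{t-1}\mathbf{1}\{A_s=k\}X_{s,t}$; $\hat\theta_k(t)=S_k(t)/\tilde N_k(t)$. DelayedUCB: play each arm once in the first $K$ rounds; for $t>K$ play $A_t\in\arg\max_kU_k(t)$ with $U_k(t)=\hat\theta_k(t)+\sqrt{N_k(t)/\tilde N_k(t)}\sqrt{\beta_\epsilon(t)/(2\tilde N_k(t))}$. *)

theory Defs
  imports "HOL-Probability.Probability"
begin

(* Outcome of the randomness: (coins, delays).
   coins t k  = potential conversion C of arm k at round t (Bernoulli (theta k)),
   delays t   = delay D_t of round t (drawn from the delay distribution). *)
type_synonym outcome = "(nat \<Rightarrow> nat \<Rightarrow> bool) \<times> (nat \<Rightarrow> nat)"

definition tau :: "nat pmf \<Rightarrow> nat \<Rightarrow> real" where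
  "tau Dd d = measure_pmf.prob Dd {..d}"

definition Cval :: "outcome \<Rightarrow> (nat \<Rightarrow> nat) \<Rightarrow> nat \<Rightarrow> real" where
  "Cval \<omega> A s = (if fst \<omega> s (A s) then 1 else 0)"

definition Xobs :: "outcome \<Rightarrow> (nat \<Rightarrow> nat) \<Rightarrow> nat \<Rightarrow> nat \<Rightarrow> real" where
  "Xobs \<omega> A s t = Cval \<omega> A s * (if snd \<omega> s \<le> t - s then 1 else 0)"

definition Yrew :: "outcome \<Rightarrow> (nat \<Rightarrow> nat) \<Rightarrow> nat \<Rightarrow> real" where
  "Yrew \<omega> A t = (\<Sum>s\<in>{1..t}. Cval \<omega> A s * (if snd \<omega> s = t - s then 1 else 0))"

definition reward :: "outcome \<Rightarrow> (nat \<Rightarrow> nat) \<Rightarrow> nat \<Rightarrow> real" where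
  "reward \<omega> A T = (\<Sum>t\<in>{1..T}. Yrew \<omega> A t)"

definition Ncnt :: "(nat \<Rightarrow> nat) \<Rightarrow> nat \<Rightarrow> nat \<Rightarrow> real" where
  "Ncnt A k t = (\<Sum>s\<in>{1..<t}. if A s = k then 1 else 0)"

definition Ntil :: "nat pmf \<Rightarrow> (nat \<Rightarrow> nat) \<Rightarrow> nat \<Rightarrow> nat \<Rightarrow> real" where
  "Ntil Dd A k t = (\<Sum>s\<in>{1..<t}. if A s = k then tau Dd (t - s) else 0)"

definition Scnt :: "outcome \<Rightarrow> (nat \<Rightarrow> nat) \<Rightarrow> nat \<Rightarrow> nat \<Rightarrow> real" where
  "Scnt \<omega> A k t = (\<Sum>s\<in>{1..<t}. if A s = k then Xobs \<omega> A s t else 0)"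

definition theta_hat :: "nat pmf \<Rightarrow> outcome \<Rightarrow> (nat \<Rightarrow> nat) \<Rightarrow> nat \<Rightarrow> nat \<Rightarrow> real" where
  "theta_hat Dd \<omega> A k t = Scnt \<omega> A k t / Ntil Dd A k t"

definition UCB :: "nat pmf \<Rightarrow> (nat \<Rightarrow> real) \<Rightarrow> outcome \<Rightarrow> (nat \<Rightarrow> nat) \<Rightarrow> nat \<Rightarrow> nat \<Rightarrow> real" where
  "UCB Dd \<beta> \<omega> A k t = theta_hat Dd \<omega> A k t
     + sqrt (Ncnt A k t / Ntil Dd A k t) * sqrt (\<beta> t / (2 * Ntil Dd A k t))"

(* Set of admissible arms at round t: the argmax of the indices U_k(t); an arm with
   tilde N_k(t) = 0 is treated as having index +infinity. *)
definition candidates :: "nat \<Rightarrow> nat pmf \<Rightarrow> (nat \<Rightarrow> real) \<Rightarrow> outcome \<Rightarrow> (nat \<Rightarrow> nat) \<Rightarrow> nat \<Rightarrow> nat set" where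
  "candidates K Dd \<beta> \<omega> A t =
     (if \<exists>k\<in>{1..K}. Ntil Dd A k t = 0 then {k\<in>{1..K}. Ntil Dd A k t = 0}
      else {k\<in>{1..K}. \<forall>j\<in>{1..K}. UCB Dd \<beta> \<omega> A j t \<le> UCB Dd \<beta> \<omega> A k t})"

(* Actions of DelayedUCB up to round t (rounds are 1-indexed; A s = 0 for s > t).
   sel is the tie-breaking rule: it gets the round, the past actions, the past
   observations X_{s,t} (s < t) and the argmax set. *)
primrec acts :: "nat \<Rightarrow> nat pmf \<Rightarrow> (nat \<Rightarrow> real)
    \<Rightarrow> (nat \<Rightarrow> (nat \<Rightarrow> nat) \<Rightarrow> (nat \<Rightarrow> real) \<Rightarrow> nat set \<Rightarrow> nat)
    \<Rightarrow> outcome \<Rightarrow> nat \<Rightarrow> (nat \<Rightarrow> nat)" where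
  "acts K Dd \<beta> sel \<omega> 0 = (\<lambda>s. 0)"
| "acts K Dd \<beta> sel \<omega> (Suc t) =
     (let A = acts K Dd \<beta> sel \<omega> t; n = Suc t in
      A(n := (if n \<le> K then n
              else sel n (\<lambda>s. if s < n then A s else 0)
                         (\<lambda>s. if s < n then Xobs \<omega> A s n else 0)
                         (candidates K Dd \<beta> \<omega> A n))))"

definition omega_pmf :: "nat \<Rightarrow> (nat \<Rightarrow> real) \<Rightarrow> nat pmf \<Rightarrow> nat \<Rightarrow> outcome pmf" where
  "omega_pmf K \<theta> Dd T =
     pair_pmf (Pi_pmf {1..T} (\<lambda>_. False) (\<lambda>t. Pi_pmf {1..K} False (\<lambda>k. bernoulli_pmf (\<theta> k))))
              (Pi_pmf {1..T} 0 (\<lambda>_. Dd))"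

definition regret :: "nat \<Rightarrow> (nat \<Rightarrow> real) \<Rightarrow> nat pmf \<Rightarrow> (nat \<Rightarrow> real)
    \<Rightarrow> (nat \<Rightarrow> (nat \<Rightarrow> nat) \<Rightarrow> (nat \<Rightarrow> real) \<Rightarrow> nat set \<Rightarrow> nat) \<Rightarrow> nat \<Rightarrow> real" where
  "regret K \<theta> Dd \<beta> sel T =
     measure_pmf.expectation (omega_pmf K \<theta> Dd T)
       (\<lambda>\<omega>. reward \<omega> (\<lambda>_. 1) T - reward \<omega> (acts K Dd \<beta> sel \<omega> T) T)"

end

theory Submission
  imports Defs
begin

definition Rpmf :: "nat \<Rightarrow> (nat \<Rightarrow> real) \<Rightarrow> nat pmf \<Rightarrow> ((nat \<Rightarrow> bool) \<times> nat) pmf" where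
  "Rpmf K \<theta> Dd = pair_pmf (Pi_pmf {1..K} False (\<lambda>k. bernoulli_pmf (\<theta> k))) Dd"

definition upd :: "outcome \<Rightarrow> nat \<Rightarrow> (nat \<Rightarrow> bool) \<times> nat \<Rightarrow> outcome" where
  "upd \<omega> n r = ((fst \<omega>)(n := fst r), (snd \<omega>)(n := snd r))"

lemma omega_Suc:
  "omega_pmf K \<theta> Dd (Suc T) = bind_pmf (omega_pmf K \<theta> Dd T) (\<lambda>\<omega>. map_pmf (upd \<omega> (Suc T)) (Rpmf K \<theta> Dd))"
proof -
  have I: "{1..Suc T} = insert (Suc T) {1..T}" by auto
  define C where "C = Pi_pmf {1..K} False (\<lambda>k. bernoulli_pmf (\<theta> k))"
  define PC where "PC = Pi_pmf {1..T} (\<lambda>_. False) (\<lambda>t. C)"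
  define PD where "PD = Pi_pmf {1..T} 0 (\<lambda>_. Dd)"
  have L: "omega_pmf K \<theta> Dd (Suc T) = 
     do {c \<leftarrow> C; f \<leftarrow> PC; d \<leftarrow> Dd; g \<leftarrow> PD; return_pmf (f(Suc T := c), g(Suc T := d))}"
    unfolding omega_pmf_def I C_def[symmetric] PC_def PD_def
    by (simp add: Pi_pmf_insert' pair_pmf_def bind_assoc_pmf bind_return_pmf)
  have R: "bind_pmf (omega_pmf K \<theta> Dd T) (\<lambda>\<omega>. map_pmf (upd \<omega> (Suc T)) (Rpmf K \<theta> Dd))
     = do {f \<leftarrow> PC; g \<leftarrow> PD; c \<leftarrow> C; d \<leftarrow> Dd; return_pmf (f(Suc T := c), g(Suc T := d))}"
    unfolding omega_pmf_def Rpmf_def C_def[symmetric] PC_def PD_def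
    by (simp add: pair_pmf_def bind_assoc_pmf bind_return_pmf map_pmf_def upd_def)
  show ?thesis unfolding L R
    apply (subst bind_commute_pmf[of C])
    apply (rule bind_pmf_cong[OF refl])
    apply (subst bind_commute_pmf[of Dd PD])
    apply (subst bind_commute_pmf[of C PD])
    by simp
qed


lemma integrable_bounded_pmf:
  fixes f :: "'a \<Rightarrow> real"
  assumes "\<And>x. \<bar>f x\<bar> \<le> B" shows "integrable (measure_pmf M) f"
  by (rule measure_pmf.integrable_const_bound[where B=B]) (use assms in auto)

lemma E_bind:
  fixes f :: "'b \<Rightarrow> real"
  assumes "\<And>y. \<bar>f y\<bar> \<le> B"
  shows "measure_pmf.expectation (bind_pmf M N) f = measure_pmf.expectation M (\<lambda>x. measure_pmf.expectation (N x) f)"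
  unfolding measure_pmf_bind
  by (rule integral_bind[where K="count_space UNIV" and B=B and B'=1])
     (use assms in \<open>auto simp: measure_pmf.emeasure_space_1 prob_space_measure_pmf prob_space_imp_subprob_space measure_pmf_in_subprob_space
         intro: prob_space.finite_measure\<close>)

lemma E_Suc:
  fixes f :: "outcome \<Rightarrow> real"
  assumes "\<And>y. \<bar>f y\<bar> \<le> B"
  shows "measure_pmf.expectation (omega_pmf K \<theta> Dd (Suc T)) f =
    measure_pmf.expectation (omega_pmf K \<theta> Dd T) (\<lambda>\<omega>. measure_pmf.expectation (Rpmf K \<theta> Dd) (\<lambda>r. f (upd \<omega> (Suc T) r)))"
  unfolding omega_Suc by (subst E_bind[where B=B]) (use assms in auto)

lemma NN_Suc:
  "nn_integral (omega_pmf K \<theta> Dd (Suc T)) f =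
    nn_integral (omega_pmf K \<theta> Dd T) (\<lambda>\<omega>. nn_integral (Rpmf K \<theta> Dd) (\<lambda>r. f (upd \<omega> (Suc T) r)))"
  unfolding omega_Suc by simp

lemma E_pair_mult:
  fixes f :: "'a \<Rightarrow> real" and g :: "'b \<Rightarrow> real"
  assumes "\<And>x. \<bar>f x\<bar> \<le> B" "\<And>x. \<bar>g x\<bar> \<le> B"
  shows "measure_pmf.expectation (pair_pmf P Q) (\<lambda>(x,y). f x * g y) =
     measure_pmf.expectation P f * measure_pmf.expectation Q g"
proof -
  have "measure_pmf.expectation (pair_pmf P Q) (\<lambda>(x,y). f x * g y) =
     measure_pmf.expectation P (\<lambda>x. measure_pmf.expectation (bind_pmf Q (\<lambda>y. return_pmf (x,y))) (\<lambda>(x,y). f x * g y))"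
    unfolding pair_pmf_def
    by (rule E_bind[where B="B*B"]) (auto simp: abs_mult intro!: mult_mono' assms)
  also have "\<dots> = measure_pmf.expectation P (\<lambda>x. measure_pmf.expectation Q (\<lambda>y. f x * g y))"
    apply (rule Bochner_Integration.integral_cong[OF refl])
    apply (subst E_bind[where B="B*B"])
     apply (auto simp: abs_mult intro!: mult_mono' assms)
    done
  also have "\<dots> = measure_pmf.expectation P (\<lambda>x. f x * measure_pmf.expectation Q g)"
    by simp
  also have "\<dots> = measure_pmf.expectation P f * measure_pmf.expectation Q g"
    by simp
  finally show ?thesis .
qed

lemma E_Pi_component:
  fixes f :: "'b \<Rightarrow> real"
  assumes "finite A" "x \<in> A"
  shows "measure_pmf.expectation (Pi_pmf A dflt p) (\<lambda>h. f (h x)) = measure_pmf.expectation (p x) f"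
proof -
  have "measure_pmf.expectation (Pi_pmf A dflt p) (\<lambda>h. f (h x)) =
     measure_pmf.expectation (map_pmf (\<lambda>h. h x) (Pi_pmf A dflt p)) f" by simp
  also have "\<dots> = measure_pmf.expectation (p x) f" using assms by (simp add: Pi_pmf_component)
  finally show ?thesis .
qed

lemma E_R_coin_delay:
  assumes "k \<in> {1..K}" "0 \<le> \<theta> k" "\<theta> k \<le> 1"
  shows "measure_pmf.expectation (Rpmf K \<theta> Dd) (\<lambda>r. (if fst r k then 1 else 0) * (if snd r \<le> d then 1 else 0) :: real)
     = \<theta> k * tau Dd d"
proof -
  have "measure_pmf.expectation (Rpmf K \<theta> Dd) (\<lambda>r. (if fst r k then 1 else 0) * (if snd r \<le> d then 1 else 0) :: real)
    = measure_pmf.expectation (Rpmf K \<theta> Dd) (\<lambda>(h,e). (\<lambda>h. if h k then 1 else 0) h * (\<lambda>e. if e \<le> d then 1 else 0) e :: real)"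
    by (simp add: case_prod_beta')
  also have "\<dots> = measure_pmf.expectation (Pi_pmf {1..K} False (\<lambda>k. bernoulli_pmf (\<theta> k))) (\<lambda>h. if h k then 1 else 0)
      * measure_pmf.expectation Dd (\<lambda>e. if e \<le> d then 1 else 0)"
    unfolding Rpmf_def by (rule E_pair_mult[where B=1]) auto
  also have "measure_pmf.expectation (Pi_pmf {1..K} False (\<lambda>k. bernoulli_pmf (\<theta> k))) (\<lambda>h. if h k then 1 else 0) = \<theta> k"
    using assms by (subst E_Pi_component[where f="\<lambda>b. if b then 1 else 0"]) auto
  also have "measure_pmf.expectation Dd (\<lambda>e. if e \<le> d then 1 else (0::real)) = tau Dd d"
  proof -
    have "(\<lambda>e. if e \<le> d then 1 else (0::real)) = indicator {..d}" by (auto simp: indicator_def)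
    then show ?thesis unfolding tau_def by (simp add: measure_pmf.emeasure_eq_measure)
  qed
  finally show ?thesis .
qed


lemma Xobs_upd: "s \<noteq> n \<Longrightarrow> Xobs (upd \<omega> n r) A s t = Xobs \<omega> A s t"
  by (simp add: Xobs_def Cval_def upd_def)

lemma Scnt_upd: "t \<le> n \<Longrightarrow> Scnt (upd \<omega> n r) A k t = Scnt \<omega> A k t"
  unfolding Scnt_def by (intro sum.cong refl) (auto simp: Xobs_upd)

lemma candidates_upd: "t \<le> n \<Longrightarrow> candidates K Dd \<beta> (upd \<omega> n r) A t = candidates K Dd \<beta> \<omega> A t"
  unfolding candidates_def UCB_def theta_hat_def by (simp add: Scnt_upd)

lemma acts_upd: "t \<le> n \<Longrightarrow> acts K Dd \<beta> sel (upd \<omega> n r) t = acts K Dd \<beta> sel \<omega> t"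
proof (induction t)
  case 0 then show ?case by simp
next
  case (Suc t)
  then have IH: "acts K Dd \<beta> sel (upd \<omega> n r) t = acts K Dd \<beta> sel \<omega> t" by simp
  have X: "(\<lambda>s. if s < Suc t then Xobs (upd \<omega> n r) (acts K Dd \<beta> sel \<omega> t) s (Suc t) else 0)
     = (\<lambda>s. if s < Suc t then Xobs \<omega> (acts K Dd \<beta> sel \<omega> t) s (Suc t) else 0)"
    using Suc.prems by (auto simp: Xobs_upd)
  show ?case by (simp only: acts.simps Let_def IH X candidates_upd[OF Suc.prems])
qed

lemma acts_eq: "acts K Dd \<beta> sel \<omega> t s = (if s \<le> t then acts K Dd \<beta> sel \<omega> s s else 0)"
proof (induction t arbitrary: s)
  case 0 then show ?case by simp
next
  case (Suc t)
  show ?case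
  proof (cases "s = Suc t")
    case True then show ?thesis by simp
  next
    case False
    have "acts K Dd \<beta> sel \<omega> (Suc t) s = acts K Dd \<beta> sel \<omega> t s" using False by (simp add: Let_def)
    also have "\<dots> = (if s \<le> t then acts K Dd \<beta> sel \<omega> s s else 0)" by (rule Suc.IH)
    finally show ?thesis using False by auto
  qed
qed

lemma Ncnt_cong: "(\<And>s. s < t \<Longrightarrow> A s = A' s) \<Longrightarrow> Ncnt A k t = Ncnt A' k t"
  unfolding Ncnt_def by (intro sum.cong refl) auto

lemma Ntil_cong: "(\<And>s. s < t \<Longrightarrow> A s = A' s) \<Longrightarrow> Ntil Dd A k t = Ntil Dd A' k t"
  unfolding Ntil_def by (intro sum.cong refl) auto

lemma Scnt_cong: "(\<And>s. s < t \<Longrightarrow> A s = A' s) \<Longrightarrow> Scnt \<omega> A k t = Scnt \<omega> A' k t"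
  unfolding Scnt_def Xobs_def Cval_def by (intro sum.cong refl) auto

lemma candidates_cong: "(\<And>s. s < t \<Longrightarrow> A s = A' s) \<Longrightarrow> candidates K Dd \<beta> \<omega> A t = candidates K Dd \<beta> \<omega> A' t"
  unfolding candidates_def UCB_def theta_hat_def
  by (simp add: Ncnt_cong[of t A A'] Ntil_cong[of t A A'] Scnt_cong[of t A A'])

lemma candidates_nonempty:
  assumes "K \<ge> 1" shows "candidates K Dd \<beta> \<omega> A t \<noteq> {}"
proof (cases "\<exists>k\<in>{1..K}. Ntil Dd A k t = 0")
  case True then show ?thesis unfolding candidates_def by auto
next
  case False
  let ?f = "\<lambda>k. UCB Dd \<beta> \<omega> A k t"
  have fin: "finite (?f ` {1..K})" and ne: "?f ` {1..K} \<noteq> {}" using assms by auto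
  obtain x where x: "x \<in> {1..K}" "?f x = Max (?f ` {1..K})" using Max_in[OF fin ne] by auto
  have "\<forall>j\<in>{1..K}. ?f j \<le> ?f x" using x(2) Max_ge[OF fin] by auto
  then show ?thesis using False x(1) unfolding candidates_def by auto
qed

lemma candidates_sub: "candidates K Dd \<beta> \<omega> A t \<subseteq> {1..K}"
  unfolding candidates_def by auto

lemma acts_round_le:
  assumes "1 \<le> t" "t \<le> K"
  shows "acts K Dd \<beta> sel \<omega> t t = t"
  using assms by (cases t) (auto simp: Let_def)

lemma acts_round_gt:
  assumes "K < t" "t \<le> T" "K \<ge> 1" and sel: "\<forall>t H X S. S \<noteq> {} \<longrightarrow> sel t H X S \<in> S"
  shows "acts K Dd \<beta> sel \<omega> T t \<in> candidates K Dd \<beta> \<omega> (acts K Dd \<beta> sel \<omega> T) t"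
proof -
  obtain t' where t': "t = Suc t'" using assms by (cases t) auto
  have cg: "candidates K Dd \<beta> \<omega> (acts K Dd \<beta> sel \<omega> t') t = candidates K Dd \<beta> \<omega> (acts K Dd \<beta> sel \<omega> T) t"
    by (rule candidates_cong) (use assms t' in \<open>auto simp: acts_eq[of _ _ _ _ _ T] acts_eq[of _ _ _ _ _ t']\<close>)
  have "acts K Dd \<beta> sel \<omega> T t = acts K Dd \<beta> sel \<omega> t t" using assms by (subst acts_eq) auto
  also have "\<dots> \<in> candidates K Dd \<beta> \<omega> (acts K Dd \<beta> sel \<omega> t') t"
    using assms t' sel candidates_nonempty[OF assms(3)] by (auto simp: Let_def)
  finally show ?thesis using cg by simp
qed

lemma acts_range:
  assumes "1 \<le> t" "t \<le> T" "K \<ge> 1" and sel: "\<forall>t H X S. S \<noteq> {} \<longrightarrow> sel t H X S \<in> S"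
  shows "acts K Dd \<beta> sel \<omega> T t \<in> {1..K}"
proof (cases "t \<le> K")
  case True
  then show ?thesis using assms acts_eq[of K Dd \<beta> sel \<omega> T t] acts_round_le[of t K] by auto
next
  case False
  then show ?thesis using acts_round_gt[OF _ assms(2-4)] candidates_sub by fastforce
qed


lemma hoeff_R:
  fixes f :: "(nat \<Rightarrow> bool) \<times> nat \<Rightarrow> real"
  assumes "\<And>r. 0 \<le> f r \<and> f r \<le> 1" "l > 0"
  shows "nn_integral (measure_pmf R) (\<lambda>r. ennreal (exp (l * (f r - measure_pmf.expectation R f)))) \<le> ennreal (exp (l\<^sup>2 / 8))"
proof -
  interpret interval_bounded_random_variable "measure_pmf R" f 0 1
    by unfold_locales (use assms in auto)
  show ?thesis using Hoeffdings_lemma_nn_integral[OF assms(2)] by simp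
qed

definition Ysum :: "(nat \<Rightarrow> outcome \<Rightarrow> bool) \<Rightarrow> (nat \<Rightarrow> (nat \<Rightarrow> bool) \<times> nat \<Rightarrow> real) \<Rightarrow> (nat \<Rightarrow> real) \<Rightarrow> nat \<Rightarrow> outcome \<Rightarrow> real" where
  "Ysum b \<phi> \<mu> T \<omega> = (\<Sum>s\<in>{1..T}. if b s \<omega> then \<phi> s (fst \<omega> s, snd \<omega> s) - \<mu> s else 0)"

definition Bsum :: "(nat \<Rightarrow> outcome \<Rightarrow> bool) \<Rightarrow> nat \<Rightarrow> outcome \<Rightarrow> real" where
  "Bsum b T \<omega> = (\<Sum>s\<in>{1..T}. if b s \<omega> then 1 else 0)"

lemma supermart:
  fixes b :: "nat \<Rightarrow> outcome \<Rightarrow> bool" and \<phi> :: "nat \<Rightarrow> (nat \<Rightarrow> bool) \<times> nat \<Rightarrow> real" and l :: real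
  assumes l: "l > 0"
    and \<phi>b: "\<And>s r. 0 \<le> \<phi> s r \<and> \<phi> s r \<le> 1"
    and bloc: "\<And>s \<omega> n r. s \<le> n \<Longrightarrow> b s (upd \<omega> n r) = b s \<omega>"
    and \<mu>: "\<And>s. \<mu> s = measure_pmf.expectation (Rpmf K \<theta> Dd) (\<phi> s)"
  shows "nn_integral (omega_pmf K \<theta> Dd T)
    (\<lambda>\<omega>. ennreal (exp (l * Ysum b \<phi> \<mu> T \<omega> - l\<^sup>2 / 8 * Bsum b T \<omega>))) \<le> 1"
proof (induction T)
  case 0
  then show ?case by (simp add: Ysum_def Bsum_def measure_pmf.emeasure_space_1)
next
  case (Suc T)
  let ?R = "Rpmf K \<theta> Dd"
  define \<Phi> where "\<Phi> \<omega> = exp (l * Ysum b \<phi> \<mu> T \<omega> - l\<^sup>2 / 8 * Bsum b T \<omega>)" for \<omega>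
  have key: "exp (l * Ysum b \<phi> \<mu> (Suc T) (upd \<omega> (Suc T) r) - l\<^sup>2 / 8 * Bsum b (Suc T) (upd \<omega> (Suc T) r))
     = \<Phi> \<omega> * exp (if b (Suc T) \<omega> then l * (\<phi> (Suc T) r - \<mu> (Suc T)) - l\<^sup>2 / 8 else 0)" for \<omega> r
  proof -
    have Y: "Ysum b \<phi> \<mu> (Suc T) (upd \<omega> (Suc T) r) = Ysum b \<phi> \<mu> T \<omega> +
       (if b (Suc T) \<omega> then \<phi> (Suc T) r - \<mu> (Suc T) else 0)"
    proof -
      have e1: "Ysum b \<phi> \<mu> (Suc T) (upd \<omega> (Suc T) r) = Ysum b \<phi> \<mu> T (upd \<omega> (Suc T) r) +
         (if b (Suc T) (upd \<omega> (Suc T) r) then \<phi> (Suc T) (fst (upd \<omega> (Suc T) r) (Suc T), snd (upd \<omega> (Suc T) r) (Suc T)) - \<mu> (Suc T) else 0)"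
        unfolding Ysum_def by simp
      have e2: "Ysum b \<phi> \<mu> T (upd \<omega> (Suc T) r) = Ysum b \<phi> \<mu> T \<omega>"
        unfolding Ysum_def
        apply (intro sum.cong refl)
        subgoal for s by (subst bloc) (auto simp: upd_def)
        done
      have e3: "b (Suc T) (upd \<omega> (Suc T) r) = b (Suc T) \<omega>" by (rule bloc) simp
      have e4: "(fst (upd \<omega> (Suc T) r) (Suc T), snd (upd \<omega> (Suc T) r) (Suc T)) = r"
        by (simp add: upd_def)
      show ?thesis by (simp only: e1 e2 e3 e4)
    qed
    have B: "Bsum b (Suc T) (upd \<omega> (Suc T) r) = Bsum b T \<omega> + (if b (Suc T) \<omega> then 1 else 0)"
    proof -
      have "Bsum b T (upd \<omega> (Suc T) r) = Bsum b T \<omega>"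
        unfolding Bsum_def by (intro sum.cong refl) (auto simp: bloc)
      then show ?thesis unfolding Bsum_def by (simp add: bloc)
    qed
    show ?thesis unfolding Y B \<Phi>_def by (auto simp: exp_add[symmetric] algebra_simps)
  qed
  have inner: "nn_integral ?R (\<lambda>r. ennreal (exp (if b (Suc T) \<omega> then l * (\<phi> (Suc T) r - \<mu> (Suc T)) - l\<^sup>2 / 8 else 0))) \<le> 1" for \<omega>
  proof (cases "b (Suc T) \<omega>")
    case True
    have "nn_integral ?R (\<lambda>r. ennreal (exp (l * (\<phi> (Suc T) r - \<mu> (Suc T)) - l\<^sup>2 / 8)))
       = nn_integral ?R (\<lambda>r. ennreal (exp (l * (\<phi> (Suc T) r - \<mu> (Suc T)))) * ennreal (exp (- (l\<^sup>2 / 8))))"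
      by (intro nn_integral_cong) (simp flip: ennreal_mult'' exp_add)
    also have "\<dots> = nn_integral ?R (\<lambda>r. ennreal (exp (l * (\<phi> (Suc T) r - \<mu> (Suc T))))) * ennreal (exp (- (l\<^sup>2 / 8)))"
      by (rule nn_integral_multc) simp
    also have "\<dots> \<le> ennreal (exp (l\<^sup>2 / 8)) * ennreal (exp (- (l\<^sup>2 / 8)))"
      by (intro mult_right_mono) (use hoeff_R[of "\<phi> (Suc T)" l ?R, OF \<phi>b l] \<mu> in auto)
    also have "\<dots> = 1" by (simp flip: ennreal_mult'' exp_add)
    finally show ?thesis using True by simp
  next
    case False then show ?thesis by (simp add: measure_pmf.emeasure_space_1)
  qed
  have "nn_integral (omega_pmf K \<theta> Dd (Suc T))
      (\<lambda>\<omega>. ennreal (exp (l * Ysum b \<phi> \<mu> (Suc T) \<omega> - l\<^sup>2 / 8 * Bsum b (Suc T) \<omega>)))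
    = nn_integral (omega_pmf K \<theta> Dd T) (\<lambda>\<omega>. nn_integral ?R (\<lambda>r. ennreal (\<Phi> \<omega>) *
         ennreal (exp (if b (Suc T) \<omega> then l * (\<phi> (Suc T) r - \<mu> (Suc T)) - l\<^sup>2 / 8 else 0))))"
    unfolding NN_Suc key by (simp add: ennreal_mult'' \<Phi>_def)
  also have "\<dots> = nn_integral (omega_pmf K \<theta> Dd T) (\<lambda>\<omega>. ennreal (\<Phi> \<omega>) * nn_integral ?R (\<lambda>r. 
         ennreal (exp (if b (Suc T) \<omega> then l * (\<phi> (Suc T) r - \<mu> (Suc T)) - l\<^sup>2 / 8 else 0))))"
    by (intro nn_integral_cong nn_integral_cmult) simp
  also have "\<dots> \<le> nn_integral (omega_pmf K \<theta> Dd T) (\<lambda>\<omega>. ennreal (\<Phi> \<omega>) * 1)"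
    by (intro nn_integral_mono mult_left_mono inner) auto
  also have "\<dots> \<le> 1" using Suc.IH by (simp add: \<Phi>_def)
  finally show ?case .
qed

lemma chernoff:
  fixes b :: "nat \<Rightarrow> outcome \<Rightarrow> bool" and \<phi> :: "nat \<Rightarrow> (nat \<Rightarrow> bool) \<times> nat \<Rightarrow> real"
  assumes \<phi>b: "\<And>s r. 0 \<le> \<phi> s r \<and> \<phi> s r \<le> 1"
    and bloc: "\<And>s \<omega> n r. s \<le> n \<Longrightarrow> b s (upd \<omega> n r) = b s \<omega>"
    and \<mu>: "\<And>s. \<mu> s = measure_pmf.expectation (Rpmf K \<theta> Dd) (\<phi> s)"
    and x: "x > 0" and n: "n > 0" and Bn: "\<And>\<omega>. Bsum b T \<omega> \<le> n"
  shows "measure_pmf.prob (omega_pmf K \<theta> Dd T) {\<omega>. Ysum b \<phi> \<mu> T \<omega> \<ge> x} \<le> exp (- 2 * x\<^sup>2 / n)"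
proof -
  define l where "l = 4 * x / n"
  have l: "l > 0" using x n by (simp add: l_def)
  define c where "c = exp (- l * x + l\<^sup>2 / 8 * n)"
  have c: "c = exp (- 2 * x\<^sup>2 / n)" unfolding c_def l_def using n by (simp add: power2_eq_square field_simps)
  let ?M = "omega_pmf K \<theta> Dd T"
  have pt: "indicator {\<omega>. Ysum b \<phi> \<mu> T \<omega> \<ge> x} \<omega> \<le> ennreal (exp (l * Ysum b \<phi> \<mu> T \<omega> - l\<^sup>2 / 8 * Bsum b T \<omega>)) * ennreal c" for \<omega>
  proof (cases "Ysum b \<phi> \<mu> T \<omega> \<ge> x")
    case True
    have "l * x \<le> l * Ysum b \<phi> \<mu> T \<omega>" using True l by (intro mult_left_mono) auto
    moreover have "l\<^sup>2 / 8 * Bsum b T \<omega> \<le> l\<^sup>2 / 8 * n" using Bn by (intro mult_left_mono) auto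
    ultimately have "0 \<le> (l * Ysum b \<phi> \<mu> T \<omega> - l\<^sup>2 / 8 * Bsum b T \<omega>) + (- l * x + l\<^sup>2 / 8 * n)" by simp
    then have "1 \<le> exp (l * Ysum b \<phi> \<mu> T \<omega> - l\<^sup>2 / 8 * Bsum b T \<omega>) * c"
      unfolding c_def exp_add[symmetric] by simp
    then show ?thesis using True by (simp add: ennreal_mult''[symmetric] c_def)
  qed simp
  have "emeasure ?M {\<omega>. Ysum b \<phi> \<mu> T \<omega> \<ge> x} = nn_integral ?M (indicator {\<omega>. Ysum b \<phi> \<mu> T \<omega> \<ge> x})"
    by simp
  also have "\<dots> \<le> nn_integral ?M (\<lambda>\<omega>. ennreal (exp (l * Ysum b \<phi> \<mu> T \<omega> - l\<^sup>2 / 8 * Bsum b T \<omega>)) * ennreal c)"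
    by (intro nn_integral_mono pt)
  also have "\<dots> = nn_integral ?M (\<lambda>\<omega>. ennreal (exp (l * Ysum b \<phi> \<mu> T \<omega> - l\<^sup>2 / 8 * Bsum b T \<omega>))) * ennreal c"
    by (rule nn_integral_multc) simp
  also have "\<dots> \<le> 1 * ennreal c"
    by (intro mult_right_mono supermart[OF l \<phi>b bloc \<mu>]) auto
  finally have "emeasure ?M {\<omega>. Ysum b \<phi> \<mu> T \<omega> \<ge> x} \<le> ennreal c" by simp
  then show ?thesis unfolding c[symmetric]
    by (simp add: measure_pmf.emeasure_eq_measure c_def)
qed


definition Nn :: "(nat \<Rightarrow> nat) \<Rightarrow> nat \<Rightarrow> nat \<Rightarrow> nat" where
  "Nn A k t = card {s\<in>{1..<t}. A s = k}"

lemma Int_Collect_ival: "{a..<b} \<inter> {s. P s} = {s\<in>{a..<b}. P s}" by auto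

lemma Ncnt_Nn: "Ncnt A k t = real (Nn A k t)"
  unfolding Ncnt_def Nn_def by (simp add: sum.If_cases Int_Collect_ival)

lemma Nn_mono: "s \<le> s' \<Longrightarrow> Nn A k s \<le> Nn A k s'"
  unfolding Nn_def by (intro card_mono) auto

lemma Nn_strict: assumes "1 \<le> s" "s < s'" "A s = k" shows "Nn A k s < Nn A k s'"
proof -
  have "{s''\<in>{1..<s}. A s'' = k} \<subset> {s''\<in>{1..<s'}. A s'' = k}" using assms by auto
  then show ?thesis unfolding Nn_def by (intro psubset_card_mono) auto
qed

lemma Nn_le: "Nn A k t \<le> t - 1"
proof -
  have "Nn A k t \<le> card {1..<t}" unfolding Nn_def by (intro card_mono) auto
  then show ?thesis by simp
qed

lemma count_lemma:
  "card {s\<in>{1..T}. A s = k \<and> Nn A k s < m} \<le> m"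
proof -
  let ?Q = "{s\<in>{1..T}. A s = k \<and> Nn A k s < m}"
  have "inj_on (Nn A k) ?Q"
  proof (rule inj_onI)
    fix x y assume "x \<in> ?Q" "y \<in> ?Q" "Nn A k x = Nn A k y"
    then show "x = y" using Nn_strict[of x y A k] Nn_strict[of y x A k]
      by (cases x y rule: linorder_cases) auto
  qed
  moreover have "Nn A k ` ?Q \<subseteq> {..<m}" by auto
  ultimately have "card ?Q \<le> card {..<m}" by (intro card_inj_on_le) auto
  then show ?thesis by simp
qed

lemma count_lemma_real:
  assumes "0 \<le> L"
  shows "real (card {s\<in>{1..T}. A s = k \<and> real (Nn A k s) < L}) \<le> L + 1"
proof -
  have "{s\<in>{1..T}. A s = k \<and> real (Nn A k s) < L} \<subseteq> {s\<in>{1..T}. A s = k \<and> Nn A k s < nat \<lceil>L\<rceil>}"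
  proof
    fix s assume "s \<in> {s\<in>{1..T}. A s = k \<and> real (Nn A k s) < L}"
    then have "s \<in> {1..T}" "A s = k" "real (Nn A k s) < L" by auto
    moreover have "int (Nn A k s) < \<lceil>L\<rceil>" using \<open>real (Nn A k s) < L\<close>
      by (simp add: less_ceiling_iff)
    then have "Nn A k s < nat \<lceil>L\<rceil>" by simp
    ultimately show "s \<in> {s\<in>{1..T}. A s = k \<and> Nn A k s < nat \<lceil>L\<rceil>}" by simp
  qed
  then have "card {s\<in>{1..T}. A s = k \<and> real (Nn A k s) < L} \<le> card {s\<in>{1..T}. A s = k \<and> Nn A k s < nat \<lceil>L\<rceil>}"
    by (intro card_mono) auto
  also have "\<dots> \<le> nat \<lceil>L\<rceil>" by (rule count_lemma)
  finally have "card {s\<in>{1..T}. A s = k \<and> real (Nn A k s) < L} \<le> nat \<lceil>L\<rceil>" .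
  then have "real (card {s\<in>{1..T}. A s = k \<and> real (Nn A k s) < L}) \<le> real (nat \<lceil>L\<rceil>)" by linarith
  also have "\<dots> \<le> L + 1" using assms by linarith
  finally show ?thesis .
qed

lemma tau_nonneg: "0 \<le> tau Dd d" by (simp add: tau_def)
lemma tau_le1: "tau Dd d \<le> 1" by (simp add: tau_def)

lemma deficit:
  fixes c M :: real
  assumes tail: "\<forall>m::nat. m \<ge> 1 \<longrightarrow> 1 - tau Dd m \<le> c / real m"
    and M: "M > 0" and c: "c > 0" and P: "P \<subseteq> {1..<t}"
  shows "(\<Sum>s\<in>P. 1 - tau Dd (t - s)) \<le> M + real (card P) * c / M"
proof -
  have fin: "finite P" using P finite_subset by blast
  define P1 where "P1 = {s\<in>P. real (t - s) \<le> M}"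
  define P2 where "P2 = {s\<in>P. \<not> real (t - s) \<le> M}"
  have PU: "P = P1 \<union> P2" and dj: "P1 \<inter> P2 = {}" unfolding P1_def P2_def by auto
  have f1: "finite P1" "finite P2" using fin unfolding P1_def P2_def by auto
  have "(\<Sum>s\<in>P. 1 - tau Dd (t - s)) = (\<Sum>s\<in>P1. 1 - tau Dd (t - s)) + (\<Sum>s\<in>P2. 1 - tau Dd (t - s))"
    unfolding PU using f1 dj by (rule sum.union_disjoint)
  also have "(\<Sum>s\<in>P1. 1 - tau Dd (t - s)) \<le> (\<Sum>s\<in>P1. 1)"
    by (intro sum_mono) (simp add: tau_nonneg)
  also have "(\<Sum>s\<in>P1. (1::real)) \<le> M"
  proof -
    have "inj_on (\<lambda>s. t - s) P1"
    proof (rule inj_onI)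
      fix x y assume "x \<in> P1" "y \<in> P1" "t - x = t - y"
      moreover have "x < t" "y < t" using \<open>x \<in> P1\<close> \<open>y \<in> P1\<close> P unfolding P1_def by auto
      ultimately show "x = y" by arith
    qed
    moreover have "(\<lambda>s. t - s) ` P1 \<subseteq> {1..nat \<lfloor>M\<rfloor>}"
    proof
      fix x assume "x \<in> (\<lambda>s. t - s) ` P1"
      then obtain s where s: "s \<in> P" "real (t - s) \<le> M" "x = t - s" unfolding P1_def by auto
      have "s < t" using s P by auto
      moreover have "t - s \<le> nat \<lfloor>M\<rfloor>" using s(2) by (simp add: le_nat_floor)
      ultimately show "x \<in> {1..nat \<lfloor>M\<rfloor>}" using s(3) by simp
    qed
    ultimately have "card P1 \<le> card {1..nat \<lfloor>M\<rfloor>}" by (intro card_inj_on_le) auto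
    then have "card P1 \<le> nat \<lfloor>M\<rfloor>" by simp
    moreover have "real (nat \<lfloor>M\<rfloor>) \<le> M" using M by linarith
    ultimately show ?thesis by simp
  qed
  also have "(\<Sum>s\<in>P2. 1 - tau Dd (t - s)) \<le> (\<Sum>s\<in>P2. c / M)"
  proof (intro sum_mono)
    fix s assume s: "s \<in> P2"
    then have "s \<in> P" "\<not> real (t - s) \<le> M" unfolding P2_def by auto
    then have "s < t" using P by auto
    then have ts: "t - s \<ge> 1" "real (t - s) > M" using \<open>\<not> real (t - s) \<le> M\<close> by auto
    have "1 - tau Dd (t - s) \<le> c / real (t - s)" using tail ts(1) by auto
    also have "\<dots> \<le> c / M" using ts(2) M c by (intro divide_left_mono) auto
    finally show "1 - tau Dd (t - s) \<le> c / M" .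
  qed
  also have "(\<Sum>s\<in>P2. c / M) \<le> real (card P) * c / M"
  proof -
    have "card P2 \<le> card P" unfolding P2_def using fin by (intro card_mono) auto
    then have "real (card P2) * (c / M) \<le> real (card P) * (c / M)"
      using c M by (intro mult_right_mono) auto
    then show ?thesis by simp
  qed
  finally show ?thesis by simp
qed

lemma Ntil_lower:
  fixes c M :: real
  assumes tail: "\<forall>m::nat. m \<ge> 1 \<longrightarrow> 1 - tau Dd m \<le> c / real m"
    and M: "M > 0" and c: "c > 0"
  shows "Ntil Dd A k t \<ge> real (Nn A k t) - M - real (Nn A k t) * c / M"
proof -
  let ?P = "{s\<in>{1..<t}. A s = k}"
  have "Ntil Dd A k t = (\<Sum>s\<in>?P. tau Dd (t - s))"
    unfolding Ntil_def by (simp add: sum.If_cases Int_Collect_ival)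
  also have "\<dots> = real (card ?P) - (\<Sum>s\<in>?P. 1 - tau Dd (t - s))"
    by (simp add: sum_subtractf)
  finally have "Ntil Dd A k t = real (Nn A k t) - (\<Sum>s\<in>?P. 1 - tau Dd (t - s))"
    unfolding Nn_def .
  moreover have "(\<Sum>s\<in>?P. 1 - tau Dd (t - s)) \<le> M + real (card ?P) * c / M"
    by (rule deficit[OF tail M c]) auto
  ultimately show ?thesis unfolding Nn_def by simp
qed

lemma Ntil_nonneg: "Ntil Dd A k t \<ge> 0"
  unfolding Ntil_def by (intro sum_nonneg) (simp add: tau_nonneg)


lemma Nn_cong: "(\<And>s. s < t \<Longrightarrow> A s = A' s) \<Longrightarrow> Nn A k t = Nn A' k t"
  unfolding Nn_def by (intro arg_cong[where f=card]) auto

lemma UCB_eq: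
  assumes "N > 0" "b \<ge> 0"
  shows "sqrt (n / N) * sqrt (b / (2 * N)) = sqrt (n * b / 2) / N"
proof -
  have "sqrt (n / N) * sqrt (b / (2 * N)) = sqrt (n / N * (b / (2 * N)))"
    by (rule real_sqrt_mult[symmetric])
  also have "sqrt (n / N * (b / (2 * N))) = sqrt (n * b / 2 / N\<^sup>2)"
    by (rule arg_cong[where f=sqrt]) (use assms in \<open>simp add: power2_eq_square field_simps\<close>)
  also have "\<dots> = sqrt (n * b / 2) / N" by (subst real_sqrt_divide) (use assms in simp)
  finally show ?thesis .
qed

locale bandit =
  fixes K :: nat and \<theta> :: "nat \<Rightarrow> real" and Dd :: "nat pmf" and c \<epsilon> :: real
    and sel :: "nat \<Rightarrow> (nat \<Rightarrow> nat) \<Rightarrow> (nat \<Rightarrow> real) \<Rightarrow> nat set \<Rightarrow> nat"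
  assumes K1: "K \<ge> 1"
    and th: "\<forall>k\<in>{1..K}. 0 \<le> \<theta> k \<and> \<theta> k \<le> 1"
    and opt: "\<forall>k\<in>{2..K}. \<theta> k < \<theta> 1"
    and c: "c > 0"
    and tail: "\<forall>m::nat. m \<ge> 1 \<longrightarrow> 1 - tau Dd m \<le> c / real m"
    and e0: "0 < \<epsilon>" and e1: "\<epsilon> < 1"
    and sel: "\<forall>t H X S. S \<noteq> {} \<longrightarrow> sel t H X S \<in> S"
begin

abbreviation \<beta> :: "nat \<Rightarrow> real" where "\<beta> \<equiv> (\<lambda>t. (1 + \<epsilon>) * ln (real t))"

abbreviation AC :: "outcome \<Rightarrow> nat \<Rightarrow> nat \<Rightarrow> nat" where "AC \<omega> T \<equiv> acts K Dd \<beta> sel \<omega> T"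

definition Dl :: "nat \<Rightarrow> real" where "Dl k = \<theta> 1 - \<theta> k"
definition dl :: "nat \<Rightarrow> real" where "dl k = \<epsilon> * Dl k / 8"
definition et :: "nat \<Rightarrow> real" where "et k = \<epsilon> * Dl k / 32"
definition n0 :: "nat \<Rightarrow> real" where "n0 k = 4 * c / (et k)\<^sup>2"
definition aa :: "nat \<Rightarrow> real" where "aa k = (1 + \<epsilon>) / (2 * (Dl k - 2 * dl k)\<^sup>2 * (1 - et k)\<^sup>2)"

lemma th1: "0 \<le> \<theta> 1" "\<theta> 1 \<le> 1" using th K1 by auto

lemma params:
  assumes k: "k \<in> {2..K}"
  shows "0 < Dl k" "Dl k \<le> 1" "0 < dl k" "0 < et k" "et k < 1/2"
    "0 < n0 k" "Dl k - 2 * dl k > 0" "0 \<le> \<theta> k" "\<theta> k \<le> 1"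
proof -
  have tk: "0 \<le> \<theta> k" "\<theta> k \<le> 1" using th k by auto
  have lt: "\<theta> k < \<theta> 1" using opt k by auto
  show D0: "0 < Dl k" using lt by (simp add: Dl_def)
  show D1: "Dl k \<le> 1" using tk th1 by (simp add: Dl_def)
  show "0 < dl k" using D0 e0 by (simp add: dl_def)
  show E0: "0 < et k" using D0 e0 by (simp add: et_def)
  have "\<epsilon> * Dl k \<le> 1 * 1" using D1 e1 e0 D0 by (intro mult_mono) auto
  then show "et k < 1/2" by (simp add: et_def)
  show "0 < n0 k" using E0 c by (simp add: n0_def)
  have "\<epsilon> * Dl k < 4 * Dl k" using e1 D0 by (intro mult_strict_right_mono) auto
  then show "Dl k - 2 * dl k > 0" by (simp add: dl_def)
  show "0 \<le> \<theta> k" "\<theta> k \<le> 1" by (fact tk)+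
qed

lemma et_dl: "et k = dl k / 4" by (simp add: et_def dl_def)

lemma aa_bound:
  assumes k: "k \<in> {2..K}"
  shows "aa k * Dl k \<le> (1 + \<epsilon>) / (1 - \<epsilon>) * (1 / (2 * Dl k))"
proof -
  note P = params[OF k]
  define q where "q = 1 - \<epsilon> / 4"
  have q: "0 < q" "q \<le> 1" using e0 e1 by (auto simp: q_def)
  have "1 - \<epsilon> \<le> q ^ 4"
    using Bernoulli_inequality[of "- \<epsilon> / 4" 4] e0 e1 by (simp add: q_def)
  have A: "Dl k - 2 * dl k = q * Dl k" by (simp add: q_def dl_def algebra_simps)
  have B: "q \<le> 1 - et k"
  proof -
    have "\<epsilon> * Dl k \<le> \<epsilon> * 1" using P e0 by (intro mult_left_mono) auto
    then show ?thesis unfolding q_def et_def using e0 by linarith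
  qed
  have "(1 - \<epsilon>) * (Dl k)\<^sup>2 \<le> q ^ 4 * (Dl k)\<^sup>2"
    using \<open>1 - \<epsilon> \<le> q ^ 4\<close> by (intro mult_right_mono) auto
  also have "\<dots> = (q * Dl k)\<^sup>2 * q\<^sup>2" by (simp add: power2_eq_square power4_eq_xxxx)
  also have "\<dots> \<le> (q * Dl k)\<^sup>2 * (1 - et k)\<^sup>2"
    using B q by (intro mult_left_mono power_mono) auto
  finally have key: "(1 - \<epsilon>) * (Dl k)\<^sup>2 \<le> (Dl k - 2 * dl k)\<^sup>2 * (1 - et k)\<^sup>2" unfolding A .
  have pos: "0 < (Dl k - 2 * dl k)\<^sup>2 * (1 - et k)\<^sup>2" using P by simp
  have "aa k * Dl k = (1 + \<epsilon>) * Dl k / (2 * ((Dl k - 2 * dl k)\<^sup>2 * (1 - et k)\<^sup>2))"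
    by (simp add: aa_def mult.assoc)
  also have "\<dots> \<le> (1 + \<epsilon>) * Dl k / (2 * ((1 - \<epsilon>) * (Dl k)\<^sup>2))"
  proof (rule divide_left_mono)
    show "2 * ((1 - \<epsilon>) * (Dl k)\<^sup>2) \<le> 2 * ((Dl k - 2 * dl k)\<^sup>2 * (1 - et k)\<^sup>2)" using key by simp
    show "0 \<le> (1 + \<epsilon>) * Dl k" using e0 P(1) by simp
    show "0 < 2 * ((Dl k - 2 * dl k)\<^sup>2 * (1 - et k)\<^sup>2) * (2 * ((1 - \<epsilon>) * (Dl k)\<^sup>2))"
      using pos e1 P(1) by (intro mult_pos_pos) auto
  qed
  also have "\<dots> = (1 + \<epsilon>) / (1 - \<epsilon>) * (1 / (2 * Dl k))"
    using P e1 by (simp add: power2_eq_square field_simps)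
  finally show ?thesis .
qed

end

context bandit begin

lemma Ntil_n0:
  assumes k: "k \<in> {2..K}" and n: "real (Nn A k t) \<ge> n0 k"
  shows "Ntil Dd A k t \<ge> (1 - et k) * real (Nn A k t)" "real (Nn A k t) > 0"
proof -
  note P = params[OF k]
  define n where "n = real (Nn A k t)"
  show npos: "real (Nn A k t) > 0" using n P by linarith
  then have n0: "n > 0" by (simp add: n_def)
  define M where "M = et k * n / 2"
  have M: "M > 0" using P n0 by (simp add: M_def)
  have L: "Ntil Dd A k t \<ge> n - M - n * c / M"
    unfolding n_def by (rule Ntil_lower[OF tail M c])
  have h: "n * c / M = 2 * c / et k" using n0 P by (simp add: M_def field_simps)
  have "4 * c / (et k)\<^sup>2 \<le> n" using n by (simp add: n_def n0_def)
  then have "4 * c \<le> n * (et k)\<^sup>2" using P by (simp add: pos_divide_le_eq)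
  then have "2 * c \<le> (et k * n / 2) * et k" by (simp add: power2_eq_square algebra_simps)
  then have h2: "2 * c / et k \<le> et k * n / 2" using P by (simp add: pos_divide_le_eq)
  have "(1 - et k) * n = n - M - et k * n / 2" by (simp add: M_def algebra_simps)
  also have "\<dots> \<le> n - M - n * c / M" using h h2 by simp
  also have "\<dots> \<le> Ntil Dd A k t" by (fact L)
  finally show "Ntil Dd A k t \<ge> (1 - et k) * real (Nn A k t)" by (simp add: n_def)
qed

definition bad1 :: "nat \<Rightarrow> outcome \<Rightarrow> nat \<Rightarrow> nat \<Rightarrow> bool" where
  "bad1 k \<omega> T t = (0 < Ntil Dd (AC \<omega> T) 1 t \<and> UCB Dd \<beta> \<omega> (AC \<omega> T) 1 t \<le> \<theta> 1 - dl k)"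

lemma CA:
  assumes k: "k \<in> {2..K}" and t: "t \<in> {1..T}" "K < t" and At: "AC \<omega> T t = k"
    and n: "real (Nn (AC \<omega> T) k t) \<ge> n0 k" and nb: "\<not> bad1 k \<omega> T t"
    and th: "theta_hat Dd \<omega> (AC \<omega> T) k t \<le> \<theta> k + dl k"
  shows "real (Nn (AC \<omega> T) k t) < aa k * ln (real T)"
proof -
  note P = params[OF k]
  define A where "A = AC \<omega> T"
  define n where "n = real (Nn A k t)"
  define Nt where "Nt = Ntil Dd A k t"
  have Nt: "Nt \<ge> (1 - et k) * n" "n > 0" using Ntil_n0[OF k n] by (simp_all add: Nt_def n_def A_def)
  have "(1 - et k) * n > 0" using Nt P by (intro mult_pos_pos) auto
  then have Ntpos: "Nt > 0" using Nt by linarith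
  have kK: "k \<in> {1..K}" using k by auto
  have cand: "k \<in> candidates K Dd \<beta> \<omega> A t"
  proof -
    have tT: "t \<le> T" using t by auto
    show ?thesis using acts_round_gt[OF t(2) tT K1 sel, where Dd=Dd and \<beta>=\<beta> and \<omega>=\<omega>] At by (simp add: A_def)
  qed
  have noZ: "\<not> (\<exists>j\<in>{1..K}. Ntil Dd A j t = 0)"
  proof
    assume "\<exists>j\<in>{1..K}. Ntil Dd A j t = 0"
    then have "Ntil Dd A k t = 0" using cand unfolding candidates_def by auto
    then show False using Ntpos by (simp add: Nt_def)
  qed
  have mx: "\<forall>j\<in>{1..K}. UCB Dd \<beta> \<omega> A j t \<le> UCB Dd \<beta> \<omega> A k t"
    using cand noZ unfolding candidates_def by auto
  have one: "1 \<in> {1..K}" using K1 by auto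
  have N1: "0 < Ntil Dd A 1 t" using noZ one Ntil_nonneg[of Dd A 1 t] by force
  have u1: "UCB Dd \<beta> \<omega> A 1 t > \<theta> 1 - dl k" using nb N1 by (auto simp: bad1_def A_def)
  have uk: "UCB Dd \<beta> \<omega> A k t > \<theta> 1 - dl k" using mx one u1 by force
  define w where "w = sqrt (Ncnt A k t / Nt) * sqrt (\<beta> t / (2 * Nt))"
  have bt: "\<beta> t \<ge> 0" using t e0 by auto
  have weq: "w = sqrt (n * \<beta> t / 2) / Nt"
    unfolding w_def n_def Ncnt_Nn by (rule UCB_eq[OF Ntpos bt])
  have "UCB Dd \<beta> \<omega> A k t = theta_hat Dd \<omega> A k t + w"
    by (simp add: UCB_def w_def Nt_def)
  then have wgt: "w > Dl k - 2 * dl k" using uk th by (simp add: Dl_def A_def)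
  then have "w\<^sup>2 > (Dl k - 2 * dl k)\<^sup>2" using P by (intro power_strict_mono) auto
  moreover have "w\<^sup>2 = n * \<beta> t / 2 / Nt\<^sup>2"
    unfolding weq using Nt bt by (simp add: power_divide)
  ultimately have "n * \<beta> t / 2 > (Dl k - 2 * dl k)\<^sup>2 * Nt\<^sup>2"
    using Ntpos by (simp add: pos_less_divide_eq)
  moreover have "(Dl k - 2 * dl k)\<^sup>2 * Nt\<^sup>2 \<ge> (Dl k - 2 * dl k)\<^sup>2 * ((1 - et k) * n)\<^sup>2"
    using Nt P by (intro mult_left_mono power_mono) auto
  ultimately have "n * \<beta> t / 2 > (Dl k - 2 * dl k)\<^sup>2 * ((1 - et k) * n)\<^sup>2" by linarith
  moreover have "(Dl k - 2 * dl k)\<^sup>2 * ((1 - et k) * n)\<^sup>2 = (Dl k - 2 * dl k)\<^sup>2 * (1 - et k)\<^sup>2 * n * n"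
    by (simp add: power2_eq_square algebra_simps)
  ultimately have "n * \<beta> t / 2 > (Dl k - 2 * dl k)\<^sup>2 * (1 - et k)\<^sup>2 * n * n" by simp
  then have "\<beta> t / 2 > (Dl k - 2 * dl k)\<^sup>2 * (1 - et k)\<^sup>2 * n"
    using Nt(2) by (smt (verit, best) mult.commute mult_le_cancel_left_pos times_divide_eq_right)
  moreover have "\<beta> t \<le> (1 + \<epsilon>) * ln (real T)" using t e0 by (intro mult_left_mono) auto
  ultimately have "2 * ((Dl k - 2 * dl k)\<^sup>2 * (1 - et k)\<^sup>2) * n < (1 + \<epsilon>) * ln (real T)" by simp
  moreover have "0 < 2 * ((Dl k - 2 * dl k)\<^sup>2 * (1 - et k)\<^sup>2)" using P by simp
  ultimately have "n < (1 + \<epsilon>) * ln (real T) / (2 * ((Dl k - 2 * dl k)\<^sup>2 * (1 - et k)\<^sup>2))"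
    by (simp add: pos_less_divide_eq mult.commute)
  then show ?thesis by (simp add: aa_def n_def A_def mult.commute mult.assoc)
qed

end

context bandit begin

definition bV :: "nat \<Rightarrow> nat \<Rightarrow> nat \<Rightarrow> outcome \<Rightarrow> bool" where
  "bV k n s \<omega> = (AC \<omega> s s = k \<and> Nn (AC \<omega> s) k s < n)"

definition phiC :: "nat \<Rightarrow> nat \<Rightarrow> (nat \<Rightarrow> bool) \<times> nat \<Rightarrow> real" where
  "phiC k s r = (if fst r k then 1 else 0)"

definition V :: "nat \<Rightarrow> nat \<Rightarrow> nat \<Rightarrow> outcome \<Rightarrow> real" where
  "V k n T \<omega> = Ysum (bV k n) (phiC k) (\<lambda>s. \<theta> k) T \<omega>"

lemma AC_eq: "s \<le> T \<Longrightarrow> AC \<omega> T s = AC \<omega> s s"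
  by (subst acts_eq) simp

lemma Nn_AC: assumes "s \<le> T" shows "Nn (AC \<omega> s) k s = Nn (AC \<omega> T) k s"
proof (rule Nn_cong)
  fix s' assume "s' < s"
  have e1: "AC \<omega> s s' = AC \<omega> s' s'" using \<open>s' < s\<close> by (intro AC_eq) simp
  have e2: "AC \<omega> T s' = AC \<omega> s' s'" using \<open>s' < s\<close> assms by (intro AC_eq) simp
  show "AC \<omega> s s' = AC \<omega> T s'" by (simp only: e1 e2)
qed

lemma bV_eq: "s \<le> T \<Longrightarrow> bV k n s \<omega> = (AC \<omega> T s = k \<and> Nn (AC \<omega> T) k s < n)"
proof -
  assume sT: "s \<le> T"
  have e1: "AC \<omega> T s = AC \<omega> s s" using sT by (rule AC_eq)
  show ?thesis unfolding bV_def by (simp only: e1 Nn_AC[OF sT])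
qed

lemma bad2V:
  assumes k: "k \<in> {2..K}" and t: "t \<in> {1..T}" and At: "AC \<omega> T t = k"
    and n: "real (Nn (AC \<omega> T) k t) \<ge> n0 k"
    and th: "theta_hat Dd \<omega> (AC \<omega> T) k t > \<theta> k + dl k"
  shows "V k (Nn (AC \<omega> T) k t) T \<omega> \<ge> dl k * real (Nn (AC \<omega> T) k t) / 4"
proof -
  note P = params[OF k]
  define A where "A = AC \<omega> T"
  define m where "m = Nn A k t"
  define Pset where "Pset = {s\<in>{1..<t}. A s = k}"
  have cardP: "card Pset = m" by (simp add: Pset_def m_def Nn_def)
  have finP: "finite Pset" by (simp add: Pset_def)
  have setEq: "{s\<in>{1..T}. A s = k \<and> Nn A k s < m} = Pset"
  proof
    show "{s\<in>{1..T}. A s = k \<and> Nn A k s < m} \<subseteq> Pset"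
    proof
      fix s assume s: "s \<in> {s\<in>{1..T}. A s = k \<and> Nn A k s < m}"
      have "s < t"
      proof (rule ccontr)
        assume "\<not> s < t"
        then have "Nn A k t \<le> Nn A k s" by (intro Nn_mono) auto
        then show False using s by (simp add: m_def)
      qed
      then show "s \<in> Pset" using s by (simp add: Pset_def)
    qed
  next
    show "Pset \<subseteq> {s\<in>{1..T}. A s = k \<and> Nn A k s < m}"
    proof
      fix s assume s: "s \<in> Pset"
      then have "1 \<le> s" "s < t" "A s = k" by (auto simp: Pset_def)
      then have "Nn A k s < Nn A k t" by (intro Nn_strict)
      then show "s \<in> {s\<in>{1..T}. A s = k \<and> Nn A k s < m}" using \<open>1 \<le> s\<close> \<open>s < t\<close> \<open>A s = k\<close> t
        by (simp add: m_def)
    qed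
  qed
  have "V k m T \<omega> = (\<Sum>s\<in>{1..T}. if A s = k \<and> Nn A k s < m then phiC k s (fst \<omega> s, snd \<omega> s) - \<theta> k else 0)"
    unfolding V_def Ysum_def
  proof (intro sum.cong refl)
    fix s assume "s \<in> {1..T}"
    then have "bV k m s \<omega> = (A s = k \<and> Nn A k s < m)" unfolding A_def by (intro bV_eq) auto
    then show "(if bV k m s \<omega> then phiC k s (fst \<omega> s, snd \<omega> s) - \<theta> k else 0) =
      (if A s = k \<and> Nn A k s < m then phiC k s (fst \<omega> s, snd \<omega> s) - \<theta> k else 0)" by (simp only:)
  qed
  also have "\<dots> = (\<Sum>s\<in>{s\<in>{1..T}. A s = k \<and> Nn A k s < m}. phiC k s (fst \<omega> s, snd \<omega> s) - \<theta> k)"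
    by (simp add: sum.If_cases Int_def)
  also have "\<dots> = (\<Sum>s\<in>Pset. phiC k s (fst \<omega> s, snd \<omega> s)) - real m * \<theta> k"
    unfolding setEq by (simp add: sum_subtractf cardP)
  finally have Veq: "V k m T \<omega> = (\<Sum>s\<in>Pset. phiC k s (fst \<omega> s, snd \<omega> s)) - real m * \<theta> k" .
  have "Scnt \<omega> A k t = (\<Sum>s\<in>Pset. Xobs \<omega> A s t)"
    unfolding Scnt_def Pset_def by (simp add: sum.If_cases Int_Collect_ival)
  also have "\<dots> \<le> (\<Sum>s\<in>Pset. phiC k s (fst \<omega> s, snd \<omega> s))"
    by (intro sum_mono) (auto simp: Pset_def Xobs_def Cval_def phiC_def)
  finally have S: "Scnt \<omega> A k t \<le> (\<Sum>s\<in>Pset. phiC k s (fst \<omega> s, snd \<omega> s))" .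
  have Nt: "Ntil Dd A k t \<ge> (1 - et k) * real m" "real m > 0"
    using Ntil_n0[OF k n] by (simp_all add: A_def m_def)
  have "(1 - et k) * real m > 0" using Nt P by (intro mult_pos_pos) auto
  then have Ntpos: "Ntil Dd A k t > 0" using Nt by linarith
  have "Scnt \<omega> A k t > (\<theta> k + dl k) * Ntil Dd A k t"
    using th Ntpos by (simp add: theta_hat_def A_def pos_less_divide_eq)
  moreover have "(\<theta> k + dl k) * Ntil Dd A k t \<ge> (\<theta> k + dl k) * ((1 - et k) * real m)"
    using Nt P by (intro mult_left_mono) auto
  ultimately have "V k m T \<omega> > (\<theta> k + dl k) * ((1 - et k) * real m) - real m * \<theta> k"
    using S Veq by linarith
  moreover have "(\<theta> k + dl k) * ((1 - et k) * real m) - real m * \<theta> k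
      = real m * (dl k - et k * (\<theta> k + dl k))" by (simp add: algebra_simps)
  moreover have D4: "dl k - et k * (\<theta> k + dl k) \<ge> dl k / 4"
  proof -
    have "\<epsilon> * Dl k \<le> 1" using e0 e1 P by (intro mult_le_one) auto
    then have "dl k \<le> 1" by (simp add: dl_def)
    then have "et k * (\<theta> k + dl k) \<le> et k * 2" using P by (intro mult_left_mono) auto
    then show ?thesis using P by (simp add: et_dl)
  qed
  moreover have "real m * (dl k / 4) \<le> real m * (dl k - et k * (\<theta> k + dl k))"
    using D4 Nt by (intro mult_left_mono) auto
  ultimately have "V k m T \<omega> > real m * (dl k / 4)" by linarith
  moreover have "dl k * real m / 4 = real m * (dl k / 4)" by simp
  ultimately show ?thesis unfolding A_def[symmetric] m_def[symmetric] by linarith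
qed

end

context bandit begin

lemma aa_nonneg: "k \<in> {2..K} \<Longrightarrow> aa k \<ge> 0"
  using e0 by (simp add: aa_def)

lemma ln_nat_nonneg: "ln (real (T::nat)) \<ge> 0"
  by (cases T) auto

lemma DC:
  assumes k: "k \<in> {2..K}"
  shows "real (card {t\<in>{1..T}. AC \<omega> T t = k}) \<le> real K + (n0 k + aa k * ln (real T) + 1)
     + real (card {t\<in>{1..T}. bad1 k \<omega> T t}) + real (card {n\<in>{1..T}. V k n T \<omega> \<ge> dl k * real n / 4})"
proof -
  note P = params[OF k]
  define A where "A = AC \<omega> T"
  define L where "L = n0 k + aa k * ln (real T)"
  have aL: "aa k * ln (real T) \<ge> 0" using aa_nonneg[OF k] ln_nat_nonneg by simp
  have L0: "L \<ge> 0" using aL P by (simp add: L_def)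
  define S where "S = {t\<in>{1..T}. A t = k}"
  define S0 where "S0 = {t\<in>{1..T}. t \<le> K}"
  define S1 where "S1 = {t\<in>{1..T}. A t = k \<and> real (Nn A k t) < L}"
  define S2 where "S2 = {t\<in>{1..T}. bad1 k \<omega> T t}"
  define S3 where "S3 = {t\<in>{1..T}. A t = k \<and> real (Nn A k t) \<ge> n0 k \<and> theta_hat Dd \<omega> A k t > \<theta> k + dl k}"
  define W where "W = {n\<in>{1..T}. V k n T \<omega> \<ge> dl k * real n / 4}"
  have sub: "S \<subseteq> S0 \<union> S1 \<union> S2 \<union> S3"
  proof
    fix t assume "t \<in> S"
    then have t: "t \<in> {1..T}" "A t = k" by (auto simp: S_def)
    show "t \<in> S0 \<union> S1 \<union> S2 \<union> S3"
    proof (cases "t \<le> K \<or> bad1 k \<omega> T t \<or> real (Nn A k t) < L")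
      case True then show ?thesis using t by (auto simp: S0_def S1_def S2_def)
    next
      case False
      then have tK: "K < t" and nb: "\<not> bad1 k \<omega> T t" and nL: "real (Nn A k t) \<ge> L" by auto
      have nn0: "real (Nn A k t) \<ge> n0 k" using nL aL by (simp add: L_def)
      show ?thesis
      proof (cases "theta_hat Dd \<omega> A k t > \<theta> k + dl k")
        case True then show ?thesis using t nn0 by (auto simp: S3_def)
      next
        case False
        then have "real (Nn (AC \<omega> T) k t) < aa k * ln (real T)"
          using CA[OF k t(1) tK _ _ nb] t nn0 by (simp add: A_def)
        then show ?thesis using nL P by (simp add: L_def A_def)
      qed
    qed
  qed
  have fin: "finite S0" "finite S1" "finite S2" "finite S3" by (auto simp: S0_def S1_def S2_def S3_def)
  have "card S \<le> card (S0 \<union> S1 \<union> S2 \<union> S3)" using sub fin by (intro card_mono) auto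
  also have "\<dots> \<le> card S0 + card S1 + card S2 + card S3"
    using fin by (meson add_mono card_Un_le le_trans finite_UnI order_refl)
  finally have cS: "real (card S) \<le> real (card S0) + real (card S1) + real (card S2) + real (card S3)"
    by linarith
  have c0: "card S0 \<le> K"
  proof -
    have "card S0 \<le> card {1..K}" by (intro card_mono) (auto simp: S0_def)
    then show ?thesis by simp
  qed
  have c1: "real (card S1) \<le> L + 1" unfolding S1_def by (rule count_lemma_real[OF L0])
  have c3: "card S3 \<le> card W"
  proof -
    have "inj_on (Nn A k) S3"
    proof (rule inj_onI)
      fix x y assume "x \<in> S3" "y \<in> S3" "Nn A k x = Nn A k y"
      then show "x = y" using Nn_strict[of x y A k] Nn_strict[of y x A k]
        by (cases x y rule: linorder_cases) (auto simp: S3_def)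
    qed
    moreover have "Nn A k ` S3 \<subseteq> W"
    proof
      fix n assume "n \<in> Nn A k ` S3"
      then obtain t where t: "t \<in> S3" "n = Nn A k t" by auto
      then have tt: "t \<in> {1..T}" "A t = k" "real (Nn A k t) \<ge> n0 k" "theta_hat Dd \<omega> A k t > \<theta> k + dl k"
        by (auto simp: S3_def)
      have "real (Nn A k t) > 0" using tt(3) P by linarith
      then have n1: "1 \<le> n" using t by simp
      have "n \<le> T" using Nn_le[of A k t] tt(1) t(2) by auto
      moreover have "V k n T \<omega> \<ge> dl k * real n / 4"
        using bad2V[OF k tt(1)] tt t(2) by (simp add: A_def)
      ultimately show "n \<in> W" using n1 by (simp add: W_def)
    qed
    ultimately show ?thesis by (intro card_inj_on_le) (auto simp: W_def)
  qed
  show ?thesis using cS c0 c1 c3 unfolding S_def S2_def W_def L_def A_def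
    by (smt (verit) of_nat_le_iff)
qed

end

lemma E_marg:
  fixes F :: "outcome \<Rightarrow> real"
  assumes loc: "\<And>\<omega> m r. n \<le> m \<Longrightarrow> F (upd \<omega> (Suc m) r) = F \<omega>" and bd: "\<And>\<omega>. \<bar>F \<omega>\<bar> \<le> B"
    and nT: "n \<le> T"
  shows "measure_pmf.expectation (omega_pmf K \<theta> Dd T) F = measure_pmf.expectation (omega_pmf K \<theta> Dd n) F"
  using nT
proof (induction T rule: dec_induct)
  case base then show ?case by simp
next
  case (step m)
  have "measure_pmf.expectation (omega_pmf K \<theta> Dd (Suc m)) F =
    measure_pmf.expectation (omega_pmf K \<theta> Dd m) (\<lambda>\<omega>. measure_pmf.expectation (Rpmf K \<theta> Dd) (\<lambda>r. F (upd \<omega> (Suc m) r)))"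
    by (rule E_Suc[OF bd])
  also have "\<dots> = measure_pmf.expectation (omega_pmf K \<theta> Dd m) F"
    using step.hyps by (simp add: loc)
  finally show ?case using step.IH by simp
qed

lemma indicator_expectation:
  "measure_pmf.expectation M (\<lambda>\<omega>. if P \<omega> then 1 else 0 :: real) = measure_pmf.prob M {\<omega>. P \<omega>}"
proof -
  have "(\<lambda>\<omega>. if P \<omega> then 1 else 0 :: real) = indicator {\<omega>. P \<omega>}" by (auto simp: indicator_def)
  then show ?thesis by (simp add: measure_pmf.emeasure_eq_measure)
qed

lemma E_card:
  assumes "finite I"
  shows "measure_pmf.expectation M (\<lambda>\<omega>. real (card {t\<in>I. P t \<omega>})) = (\<Sum>t\<in>I. measure_pmf.prob M {\<omega>. P t \<omega>})"
proof -
  have "(\<lambda>\<omega>. real (card {t\<in>I. P t \<omega>})) = (\<lambda>\<omega>. \<Sum>t\<in>I. if P t \<omega> then 1 else 0)"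
    using assms by (auto simp: sum.If_cases Int_def)
  then have "measure_pmf.expectation M (\<lambda>\<omega>. real (card {t\<in>I. P t \<omega>})) =
     (\<Sum>t\<in>I. measure_pmf.expectation M (\<lambda>\<omega>. if P t \<omega> then 1 else 0 :: real))"
    by (simp add: Bochner_Integration.integral_sum integrable_bounded_pmf[where B=1])
  then show ?thesis by (simp add: indicator_expectation)
qed

lemma E_R_coin:
  assumes "k \<in> {1..K}" "0 \<le> \<theta> k" "\<theta> k \<le> 1"
  shows "measure_pmf.expectation (Rpmf K \<theta> Dd) (\<lambda>r. if fst r k then 1 else 0 :: real) = \<theta> k"
proof -
  have "measure_pmf.expectation (Rpmf K \<theta> Dd) (\<lambda>r. if fst r k then 1 else 0 :: real)
    = measure_pmf.expectation (Rpmf K \<theta> Dd) (\<lambda>(h,e). (\<lambda>h. if h k then 1 else 0) h * (\<lambda>e. 1) e :: real)"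
    by (simp add: case_prod_beta')
  also have "\<dots> = measure_pmf.expectation (Pi_pmf {1..K} False (\<lambda>k. bernoulli_pmf (\<theta> k))) (\<lambda>h. if h k then 1 else 0)
      * measure_pmf.expectation Dd (\<lambda>e. 1)"
    unfolding Rpmf_def by (rule E_pair_mult[where B=1]) auto
  also have "measure_pmf.expectation (Pi_pmf {1..K} False (\<lambda>k. bernoulli_pmf (\<theta> k))) (\<lambda>h. if h k then 1 else 0) = \<theta> k"
    using assms by (subst E_Pi_component[where f="\<lambda>b. if b then 1 else 0"]) auto
  finally show ?thesis by simp
qed

context bandit begin

lemma AC_upd: "s \<le> m \<Longrightarrow> AC (upd \<omega> m r) s = AC \<omega> s"
  by (rule acts_upd)

lemma bV_loc: "s \<le> m \<Longrightarrow> bV k n s (upd \<omega> m r) = bV k n s \<omega>"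
  unfolding bV_def by (simp add: AC_upd)

definition b1 :: "nat \<Rightarrow> nat \<Rightarrow> nat \<Rightarrow> outcome \<Rightarrow> bool" where
  "b1 t n s \<omega> = (s < t \<and> AC \<omega> s s = 1 \<and> Nn (AC \<omega> s) 1 s < n)"

definition phi1 :: "nat \<Rightarrow> nat \<Rightarrow> (nat \<Rightarrow> bool) \<times> nat \<Rightarrow> real" where
  "phi1 t s r = 1 - (if fst r 1 then 1 else 0) * (if snd r \<le> t - s then 1 else 0)"

definition mu1 :: "nat \<Rightarrow> nat \<Rightarrow> real" where
  "mu1 t s = 1 - \<theta> 1 * tau Dd (t - s)"

lemma b1_loc: "s \<le> m \<Longrightarrow> b1 t n s (upd \<omega> m r) = b1 t n s \<omega>"
  unfolding b1_def by (simp add: AC_upd)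

lemma mu1_E: "mu1 t s = measure_pmf.expectation (Rpmf K \<theta> Dd) (phi1 t s)"
proof -
  have "measure_pmf.expectation (Rpmf K \<theta> Dd) (phi1 t s) =
    1 - measure_pmf.expectation (Rpmf K \<theta> Dd) (\<lambda>r. (if fst r 1 then 1 else 0) * (if snd r \<le> t - s then 1 else 0) :: real)"
    unfolding phi1_def
    by (subst Bochner_Integration.integral_diff) (auto intro!: integrable_bounded_pmf[where B=1])
  also have "\<dots> = 1 - \<theta> 1 * tau Dd (t - s)"
    using K1 th1 by (subst E_R_coin_delay) auto
  finally show ?thesis by (simp add: mu1_def)
qed

lemma phi1_bd: "0 \<le> phi1 t s r \<and> phi1 t s r \<le> 1"
  unfolding phi1_def by auto

lemma phiC_bd: "0 \<le> phiC k s r \<and> phiC k s r \<le> 1"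
  unfolding phiC_def by auto

lemma phiC_E: "k \<in> {2..K} \<Longrightarrow> \<theta> k = measure_pmf.expectation (Rpmf K \<theta> Dd) (phiC k s)"
  unfolding phiC_def using E_R_coin[of k K \<theta> Dd] params by auto

lemma Bsum_card: "Bsum b T \<omega> = real (card {s\<in>{1..T}. b s \<omega>})"
  unfolding Bsum_def by (simp add: sum.If_cases Int_def)

lemma Bsum_bV: "Bsum (bV k n) T \<omega> \<le> real n"
proof -
  have "{s\<in>{1..T}. bV k n s \<omega>} = {s\<in>{1..T}. AC \<omega> T s = k \<and> Nn (AC \<omega> T) k s < n}"
  proof (rule Collect_cong)
    fix s show "(s \<in> {1..T} \<and> bV k n s \<omega>) = (s \<in> {1..T} \<and> AC \<omega> T s = k \<and> Nn (AC \<omega> T) k s < n)"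
      using bV_eq[of s T k n \<omega>] by auto
  qed
  then show ?thesis unfolding Bsum_card using count_lemma[of T "AC \<omega> T" k n] by simp
qed

lemma Bsum_b1: "Bsum (b1 t n) T \<omega> \<le> real n"
proof -
  have "{s\<in>{1..T}. b1 t n s \<omega>} \<subseteq> {s\<in>{1..T}. AC \<omega> T s = 1 \<and> Nn (AC \<omega> T) 1 s < n}"
  proof
    fix s assume s: "s \<in> {s\<in>{1..T}. b1 t n s \<omega>}"
    then have "bV 1 n s \<omega>" unfolding b1_def bV_def by auto
    then show "s \<in> {s\<in>{1..T}. AC \<omega> T s = 1 \<and> Nn (AC \<omega> T) 1 s < n}"
      using bV_eq[of s T 1 n \<omega>] s by auto
  qed
  then have "card {s\<in>{1..T}. b1 t n s \<omega>} \<le> card {s\<in>{1..T}. AC \<omega> T s = 1 \<and> Nn (AC \<omega> T) 1 s < n}"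
    by (intro card_mono) auto
  then show ?thesis unfolding Bsum_card using count_lemma[of T "AC \<omega> T" 1 n] by simp
qed

lemma probV:
  assumes k: "k \<in> {2..K}" and n: "n \<ge> 1"
  shows "measure_pmf.prob (omega_pmf K \<theta> Dd T) {\<omega>. V k n T \<omega> \<ge> dl k * real n / 4} \<le> exp (- (dl k)\<^sup>2 * real n / 8)"
proof -
  note P = params[OF k]
  have x: "dl k * real n / 4 > 0" using P n by simp
  have "measure_pmf.prob (omega_pmf K \<theta> Dd T) {\<omega>. Ysum (bV k n) (phiC k) (\<lambda>s. \<theta> k) T \<omega> \<ge> dl k * real n / 4}
     \<le> exp (- 2 * (dl k * real n / 4)\<^sup>2 / real n)"
    by (rule chernoff[OF phiC_bd bV_loc phiC_E[OF k] x]) (use n Bsum_bV in auto)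
  also have "- 2 * (dl k * real n / 4)\<^sup>2 / real n = - (dl k)\<^sup>2 * real n / 8"
    using n by (simp add: power2_eq_square field_simps)
  finally show ?thesis by (simp add: V_def)
qed

end

context bandit begin

definition x1 :: "nat \<Rightarrow> nat \<Rightarrow> nat \<Rightarrow> real" where
  "x1 k t n = sqrt (real n * \<beta> t / 2) + dl k * max 0 (real n / 2 - 2 * c)"

lemma bad1_t1: "\<not> bad1 k \<omega> T 1"
  by (simp add: bad1_def Ntil_def)

lemma bad1_incl:
  assumes k: "k \<in> {2..K}" and t: "t \<in> {1..T}" and b: "bad1 k \<omega> T t"
  shows "\<exists>n\<in>{1..T}. Ysum (b1 t n) (phi1 t) (mu1 t) T \<omega> \<ge> x1 k t n"
proof -
  note P = params[OF k]
  define A where "A = AC \<omega> T"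
  define n where "n = Nn A 1 t"
  define N1 where "N1 = Ntil Dd A 1 t"
  define Pset where "Pset = {s\<in>{1..<t}. A s = 1}"
  have N1pos: "N1 > 0" and U: "UCB Dd \<beta> \<omega> A 1 t \<le> \<theta> 1 - dl k"
    using b by (auto simp: bad1_def N1_def A_def)
  have N1eq: "N1 = (\<Sum>s\<in>Pset. tau Dd (t - s))"
    unfolding N1_def Ntil_def Pset_def by (simp add: sum.If_cases Int_Collect_ival)
  have cardP: "card Pset = n" by (simp add: Pset_def n_def Nn_def)
  have n1: "n \<ge> 1"
  proof (rule ccontr)
    assume "\<not> n \<ge> 1"
    then have "card Pset = 0" using cardP by simp
    moreover have "finite Pset" by (simp add: Pset_def)
    ultimately have "Pset = {}" by simp
    then show False using N1eq N1pos by simp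
  qed
  have nT: "n \<le> T" using Nn_le[of A 1 t] t by (auto simp: n_def)
  have tT: "t \<le> T" using t by auto
  have Ysum_eq: "Ysum (b1 t n) (phi1 t) (mu1 t) T \<omega> = \<theta> 1 * N1 - Scnt \<omega> A 1 t"
  proof -
    have beq: "b1 t n s \<omega> = (s \<in> Pset)" if s: "s \<in> {1..T}" for s
    proof -
      have "AC \<omega> s s = A s" using s AC_eq[of s T \<omega>] by (simp add: A_def)
      moreover have "Nn (AC \<omega> s) 1 s = Nn A 1 s" using s Nn_AC[of s T \<omega> 1] by (simp add: A_def)
      moreover have "s < t \<Longrightarrow> A s = 1 \<Longrightarrow> Nn A 1 s < n" using s unfolding n_def by (intro Nn_strict) auto
      ultimately show ?thesis using s unfolding b1_def Pset_def by auto
    qed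
    have "Ysum (b1 t n) (phi1 t) (mu1 t) T \<omega> = (\<Sum>s\<in>{1..T}. if s \<in> Pset then phi1 t s (fst \<omega> s, snd \<omega> s) - mu1 t s else 0)"
      unfolding Ysum_def by (intro sum.cong refl) (simp add: beq)
    also have "\<dots> = (\<Sum>s\<in>Pset. phi1 t s (fst \<omega> s, snd \<omega> s) - mu1 t s)"
    proof -
      have "Pset \<subseteq> {1..T}" using tT by (auto simp: Pset_def)
      then have "{1..T} \<inter> Pset = Pset" by blast
      then show ?thesis by (simp add: sum.If_cases)
    qed
    also have "\<dots> = (\<Sum>s\<in>Pset. \<theta> 1 * tau Dd (t - s) - Xobs \<omega> A s t)"
      by (intro sum.cong refl) (auto simp: Pset_def phi1_def mu1_def Xobs_def Cval_def)
    also have "\<dots> = \<theta> 1 * N1 - (\<Sum>s\<in>Pset. Xobs \<omega> A s t)"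
      by (simp add: sum_subtractf sum_distrib_left N1eq)
    also have "(\<Sum>s\<in>Pset. Xobs \<omega> A s t) = Scnt \<omega> A 1 t"
      unfolding Scnt_def Pset_def by (simp add: sum.If_cases Int_Collect_ival)
    finally show ?thesis .
  qed
  have bt: "\<beta> t \<ge> 0" using t e0 by auto
  have "UCB Dd \<beta> \<omega> A 1 t = Scnt \<omega> A 1 t / N1 + sqrt (real n * \<beta> t / 2) / N1"
    unfolding UCB_def theta_hat_def N1_def[symmetric] Ncnt_Nn n_def[symmetric]
    using UCB_eq[OF N1pos bt] by simp
  with U have "Scnt \<omega> A 1 t / N1 + sqrt (real n * \<beta> t / 2) / N1 \<le> \<theta> 1 - dl k" by simp
  then have "(Scnt \<omega> A 1 t + sqrt (real n * \<beta> t / 2)) / N1 \<le> \<theta> 1 - dl k" by (simp add: add_divide_distrib)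
  then have "Scnt \<omega> A 1 t + sqrt (real n * \<beta> t / 2) \<le> (\<theta> 1 - dl k) * N1"
    using N1pos by (simp add: pos_divide_le_eq)
  then have Y1: "\<theta> 1 * N1 - Scnt \<omega> A 1 t \<ge> sqrt (real n * \<beta> t / 2) + dl k * N1"
    by (simp add: algebra_simps)
  have "N1 \<ge> real n - real n / 2 - real n * c / (real n / 2)"
    unfolding N1_def n_def by (rule Ntil_lower[OF tail _ c]) (use n1 n_def in simp)
  moreover have "real n * c / (real n / 2) = 2 * c" using n1 by simp
  ultimately have "N1 \<ge> real n / 2 - 2 * c" by simp
  then have "N1 \<ge> max 0 (real n / 2 - 2 * c)" using N1pos by simp
  then have "dl k * N1 \<ge> dl k * max 0 (real n / 2 - 2 * c)" using P by (intro mult_left_mono) auto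
  then have "Ysum (b1 t n) (phi1 t) (mu1 t) T \<omega> \<ge> x1 k t n"
    using Y1 Ysum_eq unfolding x1_def by linarith
  then show ?thesis using n1 nT by auto
qed

lemma prob_bad1:
  assumes k: "k \<in> {2..K}" and t: "t \<in> {1..T}"
  shows "measure_pmf.prob (omega_pmf K \<theta> Dd T) {\<omega>. bad1 k \<omega> T t}
     \<le> (\<Sum>n\<in>{1..T}. exp (- 2 * (x1 k t n)\<^sup>2 / real n))"
proof (cases "t = 1")
  case True
  then have E: "{\<omega>. bad1 k \<omega> T t} = {}" using bad1_t1[of k _ T] by auto
  show ?thesis unfolding E by (simp add: sum_nonneg)
next
  case False
  note P = params[OF k]
  let ?M = "omega_pmf K \<theta> Dd T"
  let ?E = "\<lambda>n. {\<omega>. Ysum (b1 t n) (phi1 t) (mu1 t) T \<omega> \<ge> x1 k t n}"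
  have t2: "t \<ge> 2" using t False by auto
  have btp: "\<beta> t > 0" using t2 e0 by simp
  have "measure_pmf.prob ?M {\<omega>. bad1 k \<omega> T t} \<le> measure_pmf.prob ?M (\<Union>n\<in>{1..T}. ?E n)"
    using bad1_incl[OF k t] by (intro measure_pmf.finite_measure_mono) auto
  also have "\<dots> \<le> (\<Sum>n\<in>{1..T}. measure_pmf.prob ?M (?E n))"
    by (intro measure_pmf.finite_measure_subadditive_finite) auto
  also have "\<dots> \<le> (\<Sum>n\<in>{1..T}. exp (- 2 * (x1 k t n)\<^sup>2 / real n))"
  proof (intro sum_mono)
    fix n assume n: "n \<in> {1..T}"
    have "sqrt (real n * \<beta> t / 2) > 0" using n btp by simp
    moreover have "dl k * max 0 (real n / 2 - 2 * c) \<ge> 0" using P by simp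
    ultimately have x: "x1 k t n > 0" unfolding x1_def by linarith
    show "measure_pmf.prob ?M (?E n) \<le> exp (- 2 * (x1 k t n)\<^sup>2 / real n)"
      by (rule chernoff[OF phi1_bd b1_loc mu1_E x]) (use n Bsum_b1 in auto)
  qed
  finally show ?thesis .
qed

end

lemma geom_bound:
  fixes r :: real
  assumes "0 \<le> r" "r < 1"
  shows "(\<Sum>n\<in>{1..T}. r ^ n) \<le> 1 / (1 - r)"
proof -
  have "(\<Sum>n\<in>{1..T}. r ^ n) \<le> (\<Sum>n<Suc T. r ^ n)"
    by (intro sum_mono2) (use assms in auto)
  also have "\<dots> = (1 - r ^ Suc T) / (1 - r)" using assms by (subst sum_gp_strict) simp
  also have "\<dots> \<le> 1 / (1 - r)" using assms by (intro divide_right_mono) auto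
  finally show ?thesis .
qed

lemma max_sq_bound:
  fixes n c :: real
  assumes "n \<ge> 0" "c > 0"
  shows "(max 0 (n / 2 - 2 * c))\<^sup>2 \<ge> n\<^sup>2 / 8 - 4 * c\<^sup>2"
proof (cases "n / 2 - 2 * c \<ge> 0")
  case True
  have "(n / 2 - 2 * c)\<^sup>2 = n\<^sup>2 / 8 - 4 * c\<^sup>2 + (n - 8 * c)\<^sup>2 / 8"
    by (simp add: power2_eq_square field_simps)
  moreover have "(n - 8 * c)\<^sup>2 / 8 \<ge> 0" by simp
  ultimately show ?thesis using True by simp
next
  case False
  then have "n < 4 * c" by simp
  then have "n * n \<le> (4 * c) * (4 * c)" using assms by (intro mult_mono) auto
  moreover have "0 \<le> c * c" by simp
  ultimately have "n\<^sup>2 / 8 - 4 * c\<^sup>2 \<le> 0" unfolding power2_eq_square by linarith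
  then show ?thesis using False by simp
qed

context bandit begin

definition rr :: "nat \<Rightarrow> real" where "rr k = exp (- (dl k)\<^sup>2 / 4)"
definition CC :: "nat \<Rightarrow> real" where "CC k = exp (8 * (dl k)\<^sup>2 * c\<^sup>2)"

lemma expbound:
  assumes k: "k \<in> {2..K}" and t: "t \<ge> 1" and n: "n \<ge> 1"
  shows "exp (- 2 * (x1 k t n)\<^sup>2 / real n) \<le> real t powr (- (1 + \<epsilon>)) * CC k * rr k ^ n"
proof -
  note P = params[OF k]
  define a where "a = sqrt (real n * \<beta> t / 2)"
  define m where "m = max 0 (real n / 2 - 2 * c)"
  define b where "b = dl k * m"
  have bt: "\<beta> t \<ge> 0" using t e0 by simp
  have a0: "a \<ge> 0" unfolding a_def by (rule real_sqrt_ge_zero) (use bt in simp)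
  have b0: "b \<ge> 0" using P by (auto simp: b_def m_def)
  have x: "x1 k t n = a + b" by (simp add: x1_def a_def b_def m_def)
  have "(a + b)\<^sup>2 \<ge> a\<^sup>2 + b\<^sup>2" using a0 b0 by (simp add: power2_eq_square algebra_simps)
  moreover have "a\<^sup>2 = real n * \<beta> t / 2" using bt by (simp add: a_def)
  moreover have "b\<^sup>2 \<ge> (dl k)\<^sup>2 * ((real n)\<^sup>2 / 8 - 4 * c\<^sup>2)"
    unfolding b_def m_def power_mult_distrib using max_sq_bound[of "real n" c] c
    by (intro mult_left_mono) auto
  ultimately have sq: "(x1 k t n)\<^sup>2 \<ge> real n * \<beta> t / 2 + (dl k)\<^sup>2 * ((real n)\<^sup>2 / 8 - 4 * c\<^sup>2)"
    unfolding x by linarith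
  have np: "real n > 0" using n by simp
  have A: "2 * (x1 k t n)\<^sup>2 / real n \<ge> 2 * (real n * \<beta> t / 2 + (dl k)\<^sup>2 * ((real n)\<^sup>2 / 8 - 4 * c\<^sup>2)) / real n"
    using sq np by (intro divide_right_mono) auto
  have B: "2 * (real n * \<beta> t / 2 + (dl k)\<^sup>2 * ((real n)\<^sup>2 / 8 - 4 * c\<^sup>2)) / real n
     = \<beta> t + (dl k)\<^sup>2 * real n / 4 - 8 * (dl k)\<^sup>2 * c\<^sup>2 / real n"
    using np by (simp add: field_simps power2_eq_square)
  have d8: "8 * (dl k)\<^sup>2 * c\<^sup>2 / real n \<le> 8 * (dl k)\<^sup>2 * c\<^sup>2"
    using divide_left_mono[of 1 "real n" "8 * (dl k)\<^sup>2 * c\<^sup>2"] n by simp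
  have ex: "- 2 * (x1 k t n)\<^sup>2 / real n \<le> - \<beta> t + 8 * (dl k)\<^sup>2 * c\<^sup>2 + real n * (- (dl k)\<^sup>2 / 4)"
  proof -
    have e1: "- 2 * (x1 k t n)\<^sup>2 / real n = - (2 * (x1 k t n)\<^sup>2 / real n)" by simp
    have e2: "real n * (- (dl k)\<^sup>2 / 4) = - ((dl k)\<^sup>2 * real n / 4)" by simp
    show ?thesis unfolding e1 e2 using A B d8 by linarith
  qed
  have "exp (- 2 * (x1 k t n)\<^sup>2 / real n) \<le> exp (- \<beta> t + 8 * (dl k)\<^sup>2 * c\<^sup>2 + real n * (- (dl k)\<^sup>2 / 4))"
    using ex by simp
  also have "\<dots> = exp (- \<beta> t) * CC k * rr k ^ n"
    by (simp only: exp_add CC_def rr_def exp_of_nat_mult)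
  also have "exp (- \<beta> t) = real t powr (- (1 + \<epsilon>))"
    using t by (simp add: powr_def algebra_simps)
  finally show ?thesis .
qed

end

context bandit begin

definition ZZ :: real where "ZZ = suminf (\<lambda>t::nat. real t powr (- (1 + \<epsilon>)))"

lemma zeta_sum: "(\<Sum>t\<in>{1..T}. real t powr (- (1 + \<epsilon>))) \<le> ZZ"
proof -
  have "summable (\<lambda>t::nat. real t powr (- (1 + \<epsilon>)))"
    using e0 by (subst summable_real_powr_iff) simp
  then show ?thesis unfolding ZZ_def by (rule sum_le_suminf) auto
qed

definition C1 :: "nat \<Rightarrow> real" where "C1 k = CC k * ZZ * (1 / (1 - rr k))"
definition C2 :: "nat \<Rightarrow> real" where "C2 k = 1 / (1 - exp (- (dl k)\<^sup>2 / 8))"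

lemma rr_bounds: "k \<in> {2..K} \<Longrightarrow> 0 \<le> rr k \<and> rr k < 1"
  using params(3)[of k] by (simp add: rr_def)

lemma E_bad1:
  assumes k: "k \<in> {2..K}"
  shows "measure_pmf.expectation (omega_pmf K \<theta> Dd T) (\<lambda>\<omega>. real (card {t\<in>{1..T}. bad1 k \<omega> T t})) \<le> C1 k"
proof -
  have r: "0 \<le> rr k" "rr k < 1" using rr_bounds[OF k] by auto
  have CC0: "CC k \<ge> 0" by (simp add: CC_def)
  have "measure_pmf.expectation (omega_pmf K \<theta> Dd T) (\<lambda>\<omega>. real (card {t\<in>{1..T}. bad1 k \<omega> T t}))
     = (\<Sum>t\<in>{1..T}. measure_pmf.prob (omega_pmf K \<theta> Dd T) {\<omega>. bad1 k \<omega> T t})"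
    by (rule E_card) simp
  also have "\<dots> \<le> (\<Sum>t\<in>{1..T}. \<Sum>n\<in>{1..T}. real t powr (- (1 + \<epsilon>)) * CC k * rr k ^ n)"
  proof (intro sum_mono)
    fix t assume t: "t \<in> {1..T}"
    have "measure_pmf.prob (omega_pmf K \<theta> Dd T) {\<omega>. bad1 k \<omega> T t} \<le> (\<Sum>n\<in>{1..T}. exp (- 2 * (x1 k t n)\<^sup>2 / real n))"
      by (rule prob_bad1[OF k t])
    also have "\<dots> \<le> (\<Sum>n\<in>{1..T}. real t powr (- (1 + \<epsilon>)) * CC k * rr k ^ n)"
      by (intro sum_mono expbound[OF k]) (use t in auto)
    finally show "measure_pmf.prob (omega_pmf K \<theta> Dd T) {\<omega>. bad1 k \<omega> T t} \<le> (\<Sum>n\<in>{1..T}. real t powr (- (1 + \<epsilon>)) * CC k * rr k ^ n)" .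
  qed
  also have "\<dots> = (\<Sum>t\<in>{1..T}. real t powr (- (1 + \<epsilon>))) * CC k * (\<Sum>n\<in>{1..T}. rr k ^ n)"
    by (simp add: sum_distrib_left sum_distrib_right mult.assoc) (rule sum.swap)
  also have "\<dots> \<le> ZZ * CC k * (1 / (1 - rr k))"
  proof (intro mult_mono zeta_sum geom_bound r)
    show "0 \<le> ZZ * CC k" using CC0 zeta_sum[of 0] by simp
    show "0 \<le> (\<Sum>n\<in>{1..T}. rr k ^ n)" using r by (intro sum_nonneg) auto
    show "0 \<le> CC k" by (fact CC0)
  qed (use zeta_sum[of 0] in simp_all)
  finally show ?thesis by (simp add: C1_def mult.commute mult.left_commute)
qed

lemma E_W:
  assumes k: "k \<in> {2..K}"
  shows "measure_pmf.expectation (omega_pmf K \<theta> Dd T) (\<lambda>\<omega>. real (card {n\<in>{1..T}. V k n T \<omega> \<ge> dl k * real n / 4})) \<le> C2 k"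
proof -
  have "measure_pmf.expectation (omega_pmf K \<theta> Dd T) (\<lambda>\<omega>. real (card {n\<in>{1..T}. V k n T \<omega> \<ge> dl k * real n / 4}))
     = (\<Sum>n\<in>{1..T}. measure_pmf.prob (omega_pmf K \<theta> Dd T) {\<omega>. V k n T \<omega> \<ge> dl k * real n / 4})"
    by (rule E_card) simp
  also have "\<dots> \<le> (\<Sum>n\<in>{1..T}. exp (- (dl k)\<^sup>2 / 8) ^ n)"
  proof (intro sum_mono)
    fix n assume n: "n \<in> {1..T}"
    have "measure_pmf.prob (omega_pmf K \<theta> Dd T) {\<omega>. V k n T \<omega> \<ge> dl k * real n / 4} \<le> exp (- (dl k)\<^sup>2 * real n / 8)"
      by (rule probV[OF k]) (use n in auto)
    also have "exp (- (dl k)\<^sup>2 * real n / 8) = exp (- (dl k)\<^sup>2 / 8) ^ n"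
      by (subst exp_of_nat_mult[symmetric]) (simp add: field_simps)
    finally show "measure_pmf.prob (omega_pmf K \<theta> Dd T) {\<omega>. V k n T \<omega> \<ge> dl k * real n / 4} \<le> exp (- (dl k)\<^sup>2 / 8) ^ n" .
  qed
  also have "\<dots> \<le> C2 k" unfolding C2_def
    by (rule geom_bound) (use params(3)[OF k] in auto)
  finally show ?thesis .
qed

lemma card_le_T: "real (card {t\<in>{1..T}. P t}) \<le> real T"
proof -
  have "card {t\<in>{1..T}. P t} \<le> card {1..T}" by (intro card_mono) auto
  then show ?thesis by simp
qed

lemma card_le_T': "\<bar>real (card {t\<in>{1..T}. P t})\<bar> \<le> real T"
  using card_le_T[of T P] by simp

lemma E_count:
  assumes k: "k \<in> {2..K}"
  shows "measure_pmf.expectation (omega_pmf K \<theta> Dd T) (\<lambda>\<omega>. real (card {t\<in>{1..T}. AC \<omega> T t = k}))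
    \<le> real K + (n0 k + aa k * ln (real T) + 1) + C1 k + C2 k"
proof -
  let ?M = "omega_pmf K \<theta> Dd T"
  define cst where "cst = real K + (n0 k + aa k * ln (real T) + 1)"
  let ?f1 = "\<lambda>\<omega>. real (card {t\<in>{1..T}. bad1 k \<omega> T t})"
  let ?f2 = "\<lambda>\<omega>. real (card {n\<in>{1..T}. V k n T \<omega> \<ge> dl k * real n / 4})"
  have i1: "integrable ?M ?f1" by (rule integrable_bounded_pmf[where B="real T"]) (rule card_le_T')
  have i2: "integrable ?M ?f2" by (rule integrable_bounded_pmf[where B="real T"]) (rule card_le_T')
  have "measure_pmf.expectation ?M (\<lambda>\<omega>. real (card {t\<in>{1..T}. AC \<omega> T t = k}))
     \<le> measure_pmf.expectation ?M (\<lambda>\<omega>. cst + ?f1 \<omega> + ?f2 \<omega>)"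
  proof (rule integral_mono)
    show "integrable ?M (\<lambda>\<omega>. real (card {t\<in>{1..T}. AC \<omega> T t = k}))"
      by (rule integrable_bounded_pmf[where B="real T"]) (rule card_le_T')
    show "integrable ?M (\<lambda>\<omega>. cst + ?f1 \<omega> + ?f2 \<omega>)" using i1 i2 by simp
    show "real (card {t\<in>{1..T}. AC \<omega> T t = k}) \<le> cst + ?f1 \<omega> + ?f2 \<omega>" for \<omega>
      unfolding cst_def by (rule DC[OF k])
  qed
  also have "\<dots> = cst + measure_pmf.expectation ?M ?f1 + measure_pmf.expectation ?M ?f2"
    using i1 i2 by simp
  also have "\<dots> \<le> cst + C1 k + C2 k" using E_bad1[OF k, of T] E_W[OF k, of T] by linarith
  finally show ?thesis by (simp add: cst_def)
qed

end

lemma reward_closed: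
  "reward \<omega> A T = (\<Sum>s\<in>{1..T}. Cval \<omega> A s * (if snd \<omega> s \<le> T - s then 1 else 0))"
proof (induction T)
  case 0 then show ?case by (simp add: reward_def)
next
  case (Suc T)
  have Y: "Yrew \<omega> A (Suc T) = (\<Sum>s\<in>{1..T}. Cval \<omega> A s * (if snd \<omega> s = Suc T - s then 1 else 0))
      + Cval \<omega> A (Suc T) * (if snd \<omega> (Suc T) = 0 then 1 else 0)"
    unfolding Yrew_def by (simp add: sum.cl_ivl_Suc)
  have "(\<Sum>s\<in>{1..Suc T}. Cval \<omega> A s * (if snd \<omega> s \<le> Suc T - s then 1 else 0))
     = (\<Sum>s\<in>{1..T}. Cval \<omega> A s * (if snd \<omega> s \<le> Suc T - s then 1 else 0))
      + Cval \<omega> A (Suc T) * (if snd \<omega> (Suc T) = 0 then 1 else 0)"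
    by (simp add: sum.cl_ivl_Suc)
  also have "(\<Sum>s\<in>{1..T}. Cval \<omega> A s * (if snd \<omega> s \<le> Suc T - s then 1 else 0))
     = (\<Sum>s\<in>{1..T}. Cval \<omega> A s * (if snd \<omega> s \<le> T - s then 1 else 0) + Cval \<omega> A s * (if snd \<omega> s = Suc T - s then 1 else 0))"
  proof (intro sum.cong refl)
    fix s assume "s \<in> {1..T}"
    then have "Suc T - s = Suc (T - s)" by auto
    then show "Cval \<omega> A s * (if snd \<omega> s \<le> Suc T - s then 1 else 0) =
      Cval \<omega> A s * (if snd \<omega> s \<le> T - s then 1 else 0) + Cval \<omega> A s * (if snd \<omega> s = Suc T - s then 1 else 0)"
      by (auto simp: le_Suc_eq)
  qed
  finally show ?case
    using Suc.IH Y by (simp add: reward_def sum.cl_ivl_Suc sum.distrib)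
qed

context bandit begin

definition fs :: "nat \<Rightarrow> nat \<Rightarrow> outcome \<Rightarrow> real" where
  "fs T s \<omega> = ((if fst \<omega> s 1 then 1 else 0) - (if fst \<omega> s (AC \<omega> s s) then 1 else 0)) * (if snd \<omega> s \<le> T - s then 1 else 0)"

definition gs :: "nat \<Rightarrow> outcome \<Rightarrow> real" where
  "gs s \<omega> = (\<Sum>k\<in>{2..K}. Dl k * (if AC \<omega> s s = k then 1 else 0))"

lemma gs_bd: "\<bar>gs s \<omega>\<bar> \<le> real K"
proof -
  have "\<bar>gs s \<omega>\<bar> \<le> (\<Sum>k\<in>{2..K}. \<bar>Dl k * (if AC \<omega> s s = k then 1 else 0)\<bar>)"
    unfolding gs_def by (rule sum_abs)
  also have "\<dots> \<le> (\<Sum>k\<in>{2..K}. 1)"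
  proof (intro sum_mono)
    fix k assume "k \<in> {2..K}"
    then have "0 < Dl k" "Dl k \<le> 1" using params by auto
    then show "\<bar>Dl k * (if AC \<omega> s s = k then 1 else 0)\<bar> \<le> 1" by auto
  qed
  also have "\<dots> \<le> real K" by simp
  finally show ?thesis .
qed

lemma fs_bd: "\<bar>fs T s \<omega>\<bar> \<le> 1"
  unfolding fs_def by auto

lemma regret_sum:
  "regret K \<theta> Dd \<beta> sel T = (\<Sum>s\<in>{1..T}. measure_pmf.expectation (omega_pmf K \<theta> Dd T) (fs T s))"
proof -
  have "(\<lambda>\<omega>. reward \<omega> (\<lambda>_. 1) T - reward \<omega> (AC \<omega> T) T) = (\<lambda>\<omega>. \<Sum>s\<in>{1..T}. fs T s \<omega>)"
  proof
    fix \<omega>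
    show "reward \<omega> (\<lambda>_. 1) T - reward \<omega> (AC \<omega> T) T = (\<Sum>s\<in>{1..T}. fs T s \<omega>)"
      unfolding reward_closed sum_subtractf[symmetric]
    proof (intro sum.cong refl)
      fix s assume "s \<in> {1..T}"
      then have "AC \<omega> T s = AC \<omega> s s" by (intro AC_eq) simp
      then show "Cval \<omega> (\<lambda>_. 1) s * (if snd \<omega> s \<le> T - s then 1 else 0) -
         Cval \<omega> (AC \<omega> T) s * (if snd \<omega> s \<le> T - s then 1 else 0) = fs T s \<omega>"
        unfolding fs_def Cval_def by (simp add: left_diff_distrib)
    qed
  qed
  then show ?thesis unfolding regret_def
    by (simp add: Bochner_Integration.integral_sum integrable_bounded_pmf[OF fs_bd])
qed

end

context bandit begin

lemma gs_eq: "gs s \<omega> = (if AC \<omega> s s \<in> {2..K} then Dl (AC \<omega> s s) else 0)"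
proof -
  have "gs s \<omega> = (\<Sum>k\<in>{2..K}. if AC \<omega> s s = k then Dl k else 0)"
    unfolding gs_def by (intro sum.cong refl) auto
  also have "\<dots> = (if AC \<omega> s s \<in> {2..K} then Dl (AC \<omega> s s) else 0)"
    by (rule sum.delta') simp
  finally show ?thesis .
qed

lemma fs_le_gs:
  assumes s: "s \<in> {1..T}"
  shows "measure_pmf.expectation (omega_pmf K \<theta> Dd T) (fs T s) \<le> measure_pmf.expectation (omega_pmf K \<theta> Dd T) (gs s)"
proof -
  obtain s' where s': "s = Suc s'" using s by (cases s) auto
  have sT: "s \<le> T" using s by auto
  have s1: "1 \<le> s" using s by auto
  have floc: "fs T s (upd \<omega> (Suc m) r) = fs T s \<omega>" if "s \<le> m" for \<omega> m r
  proof -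
    have "AC (upd \<omega> (Suc m) r) s = AC \<omega> s" using that by (intro AC_upd) simp
    then show ?thesis using that unfolding fs_def by (simp add: upd_def)
  qed
  have gloc: "gs s (upd \<omega> m r) = gs s \<omega>" if "s \<le> m" for \<omega> m r
  proof -
    have "AC (upd \<omega> m r) s = AC \<omega> s" using that by (intro AC_upd)
    then show ?thesis unfolding gs_def by simp
  qed
  have E1: "measure_pmf.expectation (omega_pmf K \<theta> Dd T) (fs T s) = measure_pmf.expectation (omega_pmf K \<theta> Dd s) (fs T s)"
    by (rule E_marg[OF floc fs_bd sT])
  have E2: "measure_pmf.expectation (omega_pmf K \<theta> Dd T) (gs s) = measure_pmf.expectation (omega_pmf K \<theta> Dd s) (gs s)"
    by (rule E_marg[OF _ gs_bd sT]) (rule gloc, simp)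
  have E3: "measure_pmf.expectation (omega_pmf K \<theta> Dd s) (fs T s) =
     measure_pmf.expectation (omega_pmf K \<theta> Dd s') (\<lambda>\<omega>. measure_pmf.expectation (Rpmf K \<theta> Dd) (\<lambda>r. fs T s (upd \<omega> s r)))"
    unfolding s' by (rule E_Suc[OF fs_bd])
  have E4: "measure_pmf.expectation (omega_pmf K \<theta> Dd s) (gs s) =
     measure_pmf.expectation (omega_pmf K \<theta> Dd s') (gs s)"
    unfolding s' by (subst E_Suc[OF gs_bd]) (simp add: gloc[unfolded s'])
  have inner_eq: "measure_pmf.expectation (Rpmf K \<theta> Dd) (\<lambda>r. fs T s (upd \<omega> s r)) = (\<theta> 1 - \<theta> (AC \<omega> s s)) * tau Dd (T - s)" for \<omega>
  proof -
    define a where "a = AC \<omega> s s"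
    have aK: "a \<in> {1..K}" unfolding a_def using acts_range[OF s1 order_refl K1 sel, where Dd=Dd and \<beta>=\<beta> and \<omega>=\<omega>] by auto
    have ta: "0 \<le> \<theta> a" "\<theta> a \<le> 1" using th aK by auto
    have AU: "AC (upd \<omega> s r) s = AC \<omega> s" for r by (intro AC_upd) simp
    have "(\<lambda>r. fs T s (upd \<omega> s r)) = (\<lambda>r. (if fst r 1 then 1 else 0) * (if snd r \<le> T - s then 1 else 0)
         - (if fst r a then 1 else 0) * (if snd r \<le> T - s then 1 else 0) :: real)"
    proof (rule ext)
      fix r
      have fu: "fst (upd \<omega> s r) s = fst r" "snd (upd \<omega> s r) s = snd r" by (simp_all add: upd_def)
      show "fs T s (upd \<omega> s r) = (if fst r 1 then 1 else 0) * (if snd r \<le> T - s then 1 else 0)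
         - (if fst r a then 1 else 0) * (if snd r \<le> T - s then 1 else 0)"
        unfolding fs_def AU fu a_def[symmetric] by (simp add: left_diff_distrib)
    qed
    then have "measure_pmf.expectation (Rpmf K \<theta> Dd) (\<lambda>r. fs T s (upd \<omega> s r)) =
       measure_pmf.expectation (Rpmf K \<theta> Dd) (\<lambda>r. (if fst r 1 then 1 else 0) * (if snd r \<le> T - s then 1 else 0) :: real)
       - measure_pmf.expectation (Rpmf K \<theta> Dd) (\<lambda>r. (if fst r a then 1 else 0) * (if snd r \<le> T - s then 1 else 0) :: real)"
      by (simp add: Bochner_Integration.integral_diff integrable_bounded_pmf[where B=1])
    also have "\<dots> = \<theta> 1 * tau Dd (T - s) - \<theta> a * tau Dd (T - s)"
      using K1 th1 aK ta by (simp add: E_R_coin_delay)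
    also have "\<dots> = (\<theta> 1 - \<theta> a) * tau Dd (T - s)" by (simp add: algebra_simps)
    finally show ?thesis by (simp add: a_def)
  qed
  have inner_le: "(\<theta> 1 - \<theta> (AC \<omega> s s)) * tau Dd (T - s) \<le> gs s \<omega>" for \<omega>
  proof -
    define a where "a = AC \<omega> s s"
    have aK: "a \<in> {1..K}" unfolding a_def using acts_range[OF s1 order_refl K1 sel, where Dd=Dd and \<beta>=\<beta> and \<omega>=\<omega>] by auto
    show ?thesis
    proof (cases "a = 1")
      case True then show ?thesis by (simp add: gs_eq a_def[symmetric])
    next
      case False
      then have a2: "a \<in> {2..K}" using aK by auto
      have "(\<theta> 1 - \<theta> a) * tau Dd (T - s) \<le> (\<theta> 1 - \<theta> a) * 1"
      proof (rule mult_left_mono)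
        show "tau Dd (T - s) \<le> 1" by (rule tau_le1)
        show "0 \<le> \<theta> 1 - \<theta> a" using opt a2 by fastforce
      qed
      then show ?thesis using a2 by (simp add: gs_eq a_def[symmetric] Dl_def)
    qed
  qed
  have bd: "\<bar>(\<theta> 1 - \<theta> (AC \<omega> s s)) * tau Dd (T - s)\<bar> \<le> 1" for \<omega>
  proof -
    have aK: "AC \<omega> s s \<in> {1..K}" using acts_range[OF s1 order_refl K1 sel, where Dd=Dd and \<beta>=\<beta> and \<omega>=\<omega>] by auto
    then have "\<bar>\<theta> 1 - \<theta> (AC \<omega> s s)\<bar> \<le> 1" using th th1 by fastforce
    moreover have "\<bar>tau Dd (T - s)\<bar> \<le> 1" using tau_le1 tau_nonneg by simp
    ultimately show ?thesis by (simp add: abs_mult mult_le_one)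
  qed
  have "measure_pmf.expectation (omega_pmf K \<theta> Dd s') (\<lambda>\<omega>. (\<theta> 1 - \<theta> (AC \<omega> s s)) * tau Dd (T - s))
     \<le> measure_pmf.expectation (omega_pmf K \<theta> Dd s') (gs s)"
    by (rule integral_mono[OF integrable_bounded_pmf[OF bd] integrable_bounded_pmf[OF gs_bd] inner_le])
  then show ?thesis using E1 E2 E3 E4 inner_eq by simp
qed

end

context bandit begin

lemma sum_gs: "(\<Sum>s\<in>{1..T}. gs s \<omega>) = (\<Sum>k\<in>{2..K}. Dl k * real (card {t\<in>{1..T}. AC \<omega> T t = k}))"
proof -
  have "(\<Sum>s\<in>{1..T}. gs s \<omega>) = (\<Sum>k\<in>{2..K}. \<Sum>s\<in>{1..T}. Dl k * (if AC \<omega> s s = k then 1 else 0))"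
    unfolding gs_def by (rule sum.swap)
  also have "\<dots> = (\<Sum>k\<in>{2..K}. Dl k * real (card {t\<in>{1..T}. AC \<omega> T t = k}))"
  proof (intro sum.cong refl)
    fix k
    have "(\<Sum>s\<in>{1..T}. (if AC \<omega> s s = k then 1 else 0 :: real)) = (\<Sum>s\<in>{1..T}. (if AC \<omega> T s = k then 1 else 0))"
    proof (intro sum.cong refl)
      fix s assume "s \<in> {1..T}"
      then have "AC \<omega> T s = AC \<omega> s s" by (intro AC_eq) simp
      then show "(if AC \<omega> s s = k then 1 else 0 :: real) = (if AC \<omega> T s = k then 1 else 0)" by simp
    qed
    also have "\<dots> = real (card {t\<in>{1..T}. AC \<omega> T t = k})"
      by (simp add: sum.If_cases Int_def)
    finally show "(\<Sum>s\<in>{1..T}. Dl k * (if AC \<omega> s s = k then 1 else 0)) = Dl k * real (card {t\<in>{1..T}. AC \<omega> T t = k})"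
      by (simp add: sum_distrib_left[symmetric])
  qed
  finally show ?thesis .
qed

lemma regret_le_counts:
  "regret K \<theta> Dd \<beta> sel T \<le> (\<Sum>k\<in>{2..K}. Dl k * measure_pmf.expectation (omega_pmf K \<theta> Dd T) (\<lambda>\<omega>. real (card {t\<in>{1..T}. AC \<omega> T t = k})))"
proof -
  let ?M = "omega_pmf K \<theta> Dd T"
  have "regret K \<theta> Dd \<beta> sel T = (\<Sum>s\<in>{1..T}. measure_pmf.expectation ?M (fs T s))" by (rule regret_sum)
  also have "\<dots> \<le> (\<Sum>s\<in>{1..T}. measure_pmf.expectation ?M (gs s))"
    by (intro sum_mono fs_le_gs)
  also have "\<dots> = measure_pmf.expectation ?M (\<lambda>\<omega>. \<Sum>s\<in>{1..T}. gs s \<omega>)"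
    by (simp add: Bochner_Integration.integral_sum integrable_bounded_pmf[OF gs_bd])
  also have "\<dots> = measure_pmf.expectation ?M (\<lambda>\<omega>. \<Sum>k\<in>{2..K}. Dl k * real (card {t\<in>{1..T}. AC \<omega> T t = k}))"
    by (simp only: sum_gs)
  also have "\<dots> = (\<Sum>k\<in>{2..K}. measure_pmf.expectation ?M (\<lambda>\<omega>. Dl k * real (card {t\<in>{1..T}. AC \<omega> T t = k})))"
  proof (rule Bochner_Integration.integral_sum)
    fix k show "integrable ?M (\<lambda>\<omega>. Dl k * real (card {t\<in>{1..T}. AC \<omega> T t = k}))"
      by (rule integrable_mult_right) (rule integrable_bounded_pmf[OF card_le_T'])
  qed
  also have "\<dots> = (\<Sum>k\<in>{2..K}. Dl k * measure_pmf.expectation ?M (\<lambda>\<omega>. real (card {t\<in>{1..T}. AC \<omega> T t = k})))"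
    by (simp only: integral_mult_right_zero)
  finally show ?thesis .
qed

definition GG :: real where
  "GG = (\<Sum>k\<in>{2..K}. Dl k * (real K + n0 k + 1 + C1 k + C2 k))"

lemma regret_bound:
  "regret K \<theta> Dd \<beta> sel T \<le> (1 + \<epsilon>) / (1 - \<epsilon>) * ln (real T) * (\<Sum>k\<in>{2..K}. 1 / (2 * (\<theta> 1 - \<theta> k))) + GG"
proof -
  have "regret K \<theta> Dd \<beta> sel T \<le> (\<Sum>k\<in>{2..K}. Dl k * measure_pmf.expectation (omega_pmf K \<theta> Dd T) (\<lambda>\<omega>. real (card {t\<in>{1..T}. AC \<omega> T t = k})))"
    by (rule regret_le_counts)
  also have "\<dots> \<le> (\<Sum>k\<in>{2..K}. Dl k * (real K + (n0 k + aa k * ln (real T) + 1) + C1 k + C2 k))"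
  proof (intro sum_mono mult_left_mono E_count)
    fix k assume k: "k \<in> {2..K}"
    show "0 \<le> Dl k" using params(1)[OF k] by simp
  qed (simp_all)
  also have "\<dots> = (\<Sum>k\<in>{2..K}. (aa k * Dl k) * ln (real T)) + GG"
    by (simp add: GG_def sum.distrib[symmetric] algebra_simps)
  also have "(\<Sum>k\<in>{2..K}. (aa k * Dl k) * ln (real T)) \<le> (\<Sum>k\<in>{2..K}. ((1 + \<epsilon>) / (1 - \<epsilon>) * (1 / (2 * Dl k))) * ln (real T))"
    by (intro sum_mono mult_right_mono aa_bound ln_nat_nonneg) auto
  also have "\<dots> = (1 + \<epsilon>) / (1 - \<epsilon>) * ln (real T) * (\<Sum>k\<in>{2..K}. 1 / (2 * (\<theta> 1 - \<theta> k)))"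
    by (simp add: sum_distrib_left sum_distrib_right Dl_def algebra_simps)
  finally show ?thesis by simp
qed

lemma main:
  "\<exists>g :: nat \<Rightarrow> real.
     ((\<lambda>T. g T / ln (real T)) \<longlongrightarrow> 0) sequentially \<and>
     (\<forall>T. regret K \<theta> Dd \<beta> sel T
          \<le> (1 + \<epsilon>) / (1 - \<epsilon>) * ln (real T) * (\<Sum>k\<in>{2..K}. 1 / (2 * (\<theta> 1 - \<theta> k))) + g T)"
proof (intro exI conjI allI)
  have "filterlim (\<lambda>T::nat. ln (real T)) at_top sequentially"
    by (rule filterlim_compose[OF ln_at_top filterlim_real_sequentially])
  then have "filterlim (\<lambda>T::nat. ln (real T)) at_infinity sequentially"
    by (rule filterlim_at_top_imp_at_infinity)
  then show "((\<lambda>T. (\<lambda>_. GG) T / ln (real T)) \<longlongrightarrow> 0) sequentially"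
    by (intro tendsto_divide_0[OF tendsto_const])
next
  fix T
  show "regret K \<theta> Dd \<beta> sel T \<le> (1 + \<epsilon>) / (1 - \<epsilon>) * ln (real T) * (\<Sum>k\<in>{2..K}. 1 / (2 * (\<theta> 1 - \<theta> k))) + (\<lambda>_. GG) T"
    using regret_bound by simp
qed

end

theorem corollary10:
  fixes K :: nat and \<theta> :: "nat \<Rightarrow> real" and Dd :: "nat pmf" and c \<epsilon> :: real
    and sel :: "nat \<Rightarrow> (nat \<Rightarrow> nat) \<Rightarrow> (nat \<Rightarrow> real) \<Rightarrow> nat set \<Rightarrow> nat"
  assumes "K \<ge> 1"
    and "\<forall>k\<in>{1..K}. 0 \<le> \<theta> k \<and> \<theta> k \<le> 1"
    and "\<forall>k\<in>{2..K}. \<theta> k < \<theta> 1"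
    and "c > 0"
    and "\<forall>m::nat. m \<ge> 1 \<longrightarrow> 1 - tau Dd m \<le> c / real m"
    and "0 < \<epsilon>" and "\<epsilon> < 1"
    and "\<forall>t H X S. S \<noteq> {} \<longrightarrow> sel t H X S \<in> S"
  shows "\<exists>g :: nat \<Rightarrow> real.
           ((\<lambda>T. g T / ln (real T)) \<longlongrightarrow> 0) sequentially \<and>
           (\<forall>T. regret K \<theta> Dd (\<lambda>t. (1 + \<epsilon>) * ln (real t)) sel T
                \<le> (1 + \<epsilon>) / (1 - \<epsilon>) * ln (real T) * (\<Sum>k\<in>{2..K}. 1 / (2 * (\<theta> 1 - \<theta> k))) + g T)"
proof -
  interpret bandit K \<theta> Dd c \<epsilon> sel
    by unfold_locales (use assms in auto)
  show ?thesis by (rule main)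
qed


end
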